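(* Fix $\gamma\neq0$. Consider the subclass of equations $i\psi_t+\psi_{xx}+|\psi|^\gamma\psi+V\psi=0$ with stationary potentials, i.e. $V=V(x)$ an arbitrary smooth complex-valued function of $x$. The intersection of the maximal Lie invariance algebras of all equations in this subclass is $\langle M,\ D(1)\rangle=\langle M,\ \partial_t\rangle$.
   Context: $M=i(\psi\partial_\psi-\psi^*\partial_{\psi^*})$, and $D(1)=\partial_t$. Lie symmetries are vector fields on the space of $(t,x,\psi,\psi^* )$, with $\psi^*$ treated as an independent variable. *)

theory Defs
  imports "HOL-Analysis.Analysis"
begin

fun Ck :: "nat \<Rightarrow> ('a::real_normed_vector \<Rightarrow> 'b::real_normed_vector) \<Rightarrow> bool" where
  "Ck 0 f = continuous_on UNIV f"
| "Ck (Suc k) f = ((\<forall>p. f differentiable (at p)) \<and>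
                    (\<forall>e. Ck k (\<lambda>p. frechet_derivative f (at p) e)))"

definition smooth :: "('a::real_normed_vector \<Rightarrow> 'b::real_normed_vector) \<Rightarrow> bool" where
  "smooth f \<longleftrightarrow> (\<forall>k. Ck k f)"

definition dT :: "(real \<Rightarrow> real \<Rightarrow> complex) \<Rightarrow> real \<Rightarrow> real \<Rightarrow> complex" where
  "dT f t x = vector_derivative (\<lambda>s. f s x) (at t)"

definition dX :: "(real \<Rightarrow> real \<Rightarrow> complex) \<Rightarrow> real \<Rightarrow> real \<Rightarrow> complex" where
  "dX f t x = vector_derivative (\<lambda>s. f t s) (at x)"

text \<open>Nonlinearity |psi|^gamma psi and its directional (real) derivative in
  direction w, i.e. the action of eta d/dpsi + conj(eta) d/dpsi* on it.\<close>

definition NL :: "real \<Rightarrow> complex \<Rightarrow> complex" where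
  "NL \<gamma> z = complex_of_real (cmod z powr \<gamma>) * z"

definition dNL :: "real \<Rightarrow> complex \<Rightarrow> complex \<Rightarrow> complex" where
  "dNL \<gamma> z w = vector_derivative (\<lambda>s. NL \<gamma> (z + complex_of_real s * w)) (at 0)"

definition Delta :: "real \<Rightarrow> (real \<Rightarrow> complex) \<Rightarrow> (real \<Rightarrow> real \<Rightarrow> complex) \<Rightarrow> real \<Rightarrow> real \<Rightarrow> complex" where
  "Delta \<gamma> V \<psi> t x = \<i> * dT \<psi> t x + dX (dX \<psi>) t x + NL \<gamma> (\<psi> t x) + V x * \<psi> t x"

text \<open>A point vector field Q = tau d_t + xi d_x + eta d_psi + conj(eta) d_psi*
  (tau, xi real; coefficients depend on (t,x,psi), psi in C = R^2, i.e. on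
  (t,x,psi,psi*)). Characteristic along psi and second-prolongation
  coefficients eta^t, eta^xx, with total derivatives realised along psi.\<close>

definition charQ :: "(real \<Rightarrow> real \<Rightarrow> complex \<Rightarrow> real) \<Rightarrow> (real \<Rightarrow> real \<Rightarrow> complex \<Rightarrow> real)
    \<Rightarrow> (real \<Rightarrow> real \<Rightarrow> complex \<Rightarrow> complex) \<Rightarrow> (real \<Rightarrow> real \<Rightarrow> complex) \<Rightarrow> real \<Rightarrow> real \<Rightarrow> complex" where
  "charQ \<tau> \<xi> \<eta> \<psi> t x = \<eta> t x (\<psi> t x)
      - complex_of_real (\<tau> t x (\<psi> t x)) * dT \<psi> t x
      - complex_of_real (\<xi> t x (\<psi> t x)) * dX \<psi> t x"

definition eta_t :: "(real \<Rightarrow> real \<Rightarrow> complex \<Rightarrow> real) \<Rightarrow> (real \<Rightarrow> real \<Rightarrow> complex \<Rightarrow> real)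
    \<Rightarrow> (real \<Rightarrow> real \<Rightarrow> complex \<Rightarrow> complex) \<Rightarrow> (real \<Rightarrow> real \<Rightarrow> complex) \<Rightarrow> real \<Rightarrow> real \<Rightarrow> complex" where
  "eta_t \<tau> \<xi> \<eta> \<psi> t x = dT (charQ \<tau> \<xi> \<eta> \<psi>) t x
      + complex_of_real (\<tau> t x (\<psi> t x)) * dT (dT \<psi>) t x
      + complex_of_real (\<xi> t x (\<psi> t x)) * dX (dT \<psi>) t x"

definition eta_xx :: "(real \<Rightarrow> real \<Rightarrow> complex \<Rightarrow> real) \<Rightarrow> (real \<Rightarrow> real \<Rightarrow> complex \<Rightarrow> real)
    \<Rightarrow> (real \<Rightarrow> real \<Rightarrow> complex \<Rightarrow> complex) \<Rightarrow> (real \<Rightarrow> real \<Rightarrow> complex) \<Rightarrow> real \<Rightarrow> real \<Rightarrow> complex" where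
  "eta_xx \<tau> \<xi> \<eta> \<psi> t x = dX (dX (charQ \<tau> \<xi> \<eta> \<psi>)) t x
      + complex_of_real (\<tau> t x (\<psi> t x)) * dT (dX (dX \<psi>)) t x
      + complex_of_real (\<xi> t x (\<psi> t x)) * dX (dX (dX \<psi>)) t x"

definition prQDelta :: "real \<Rightarrow> (real \<Rightarrow> complex) \<Rightarrow> (real \<Rightarrow> real \<Rightarrow> complex \<Rightarrow> real) \<Rightarrow> (real \<Rightarrow> real \<Rightarrow> complex \<Rightarrow> real)
    \<Rightarrow> (real \<Rightarrow> real \<Rightarrow> complex \<Rightarrow> complex) \<Rightarrow> (real \<Rightarrow> real \<Rightarrow> complex) \<Rightarrow> real \<Rightarrow> real \<Rightarrow> complex" where
  "prQDelta \<gamma> V \<tau> \<xi> \<eta> \<psi> t x =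
      \<i> * eta_t \<tau> \<xi> \<eta> \<psi> t x + eta_xx \<tau> \<xi> \<eta> \<psi> t x
      + dNL \<gamma> (\<psi> t x) (\<eta> t x (\<psi> t x))
      + complex_of_real (\<xi> t x (\<psi> t x)) * vector_derivative V (at x) * \<psi> t x
      + V x * \<eta> t x (\<psi> t x)"

text \<open>Lie symmetry (infinitesimal invariance criterion): smooth coefficients and
  pr^(2) Q Delta = 0 on every second-order jet (realised by a smooth psi at a
  point) lying on the manifold Delta = 0 (with psi <> 0).\<close>

definition lie_sym :: "real \<Rightarrow> (real \<Rightarrow> complex) \<Rightarrow> (real \<Rightarrow> real \<Rightarrow> complex \<Rightarrow> real) \<Rightarrow> (real \<Rightarrow> real \<Rightarrow> complex \<Rightarrow> real)
    \<Rightarrow> (real \<Rightarrow> real \<Rightarrow> complex \<Rightarrow> complex) \<Rightarrow> bool" where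
  "lie_sym \<gamma> V \<tau> \<xi> \<eta> \<longleftrightarrow>
     smooth (\<lambda>(t,x,z). \<tau> t x z) \<and> smooth (\<lambda>(t,x,z). \<xi> t x z) \<and> smooth (\<lambda>(t,x,z). \<eta> t x z) \<and>
     (\<forall>\<psi> t x. smooth (\<lambda>(t,x). \<psi> t x) \<and> \<psi> t x \<noteq> 0 \<and> Delta \<gamma> V \<psi> t x = 0
        \<longrightarrow> prQDelta \<gamma> V \<tau> \<xi> \<eta> \<psi> t x = 0)"

definition max_lie_alg :: "real \<Rightarrow> (real \<Rightarrow> complex)
   \<Rightarrow> ((real \<Rightarrow> real \<Rightarrow> complex \<Rightarrow> real) \<times> (real \<Rightarrow> real \<Rightarrow> complex \<Rightarrow> real) \<times> (real \<Rightarrow> real \<Rightarrow> complex \<Rightarrow> complex)) set" where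
  "max_lie_alg \<gamma> V = {(\<tau>, \<xi>, \<eta>). lie_sym \<gamma> V \<tau> \<xi> \<eta>}"

end

theory Submission
  imports Defs
begin

lemma Ck_Suc_imp: "Ck (Suc k) f \<Longrightarrow> Ck k f"
proof (induction k arbitrary: f)
  case 0
  then have "\<forall>p. f differentiable (at p)" unfolding Ck.simps by blast
  then have "continuous_on UNIV f"
    by (intro continuous_at_imp_continuous_on ballI differentiable_imp_continuous_within) blast
  then show ?case by (simp only: Ck.simps)
next
  case (Suc k)
  have A: "\<forall>p. f differentiable (at p)" and B: "\<forall>e. Ck (Suc k) (\<lambda>p. frechet_derivative f (at p) e)"
    using Suc.prems[unfolded Ck.simps(2)[of "Suc k"]] by blast+
  have "\<forall>e. Ck k (\<lambda>p. frechet_derivative f (at p) e)" using B Suc.IH by blast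
  then show ?case using A by (subst Ck.simps(2)) blast
qed

lemma Ck_const: "Ck k (\<lambda>p. c)"
proof (induction k arbitrary: c)
  case 0 then show ?case by simp
next
  case (Suc k)
  have "frechet_derivative (\<lambda>p. c) (at p) = (\<lambda>h. 0)" for p
    by (metis frechet_derivative_at has_derivative_const)
  then show ?case using Suc.IH by (simp only: Ck.simps) simp
qed

lemma Ck_linear: "bounded_linear L \<Longrightarrow> Ck k L"
proof (cases k)
  case 0 assume "bounded_linear L"
  then show ?thesis using 0 by (simp add: linear_continuous_on)
next
  case (Suc j) assume L: "bounded_linear L"
  have fL: "frechet_derivative L (at p) = L" for p
    by (metis L frechet_derivative_at bounded_linear_imp_has_derivative)
  have "Ck j (\<lambda>p. L e)" for e by (rule Ck_const)
  then show ?thesis unfolding Suc using L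
    by (subst Ck.simps(2)) (simp only: fL, blast intro: bounded_linear_imp_differentiable)
qed

lemma Ck_add: "Ck k f \<Longrightarrow> Ck k g \<Longrightarrow> Ck k (\<lambda>p. f p + g p)"
proof (induction k arbitrary: f g)
  case 0 then show ?case unfolding Ck.simps by (rule continuous_on_add)
next
  case (Suc k)
  have df: "\<And>p. f differentiable (at p)" and dg: "\<And>p. g differentiable (at p)" using Suc.prems unfolding Ck.simps by blast+
  have eq: "frechet_derivative (\<lambda>p. f p + g p) (at p) e = frechet_derivative f (at p) e + frechet_derivative g (at p) e" for p e
  proof -
    have "((\<lambda>p. f p + g p) has_derivative (\<lambda>h. frechet_derivative f (at p) h + frechet_derivative g (at p) h)) (at p)"
      using has_derivative_add[OF df[of p, unfolded frechet_derivative_works] dg[of p, unfolded frechet_derivative_works]] .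
    from fun_cong[OF frechet_derivative_at[OF this], of e] show ?thesis by simp
  qed
  show ?case
  proof (simp only: Ck.simps, intro conjI allI)
    fix p show "(\<lambda>p. f p + g p) differentiable at p" using df dg by (rule differentiable_add)
  next
    fix e
    have "Ck k (\<lambda>p. frechet_derivative f (at p) e)" "Ck k (\<lambda>p. frechet_derivative g (at p) e)"
      using Suc.prems unfolding Ck.simps by blast+
    then have "Ck k (\<lambda>p. frechet_derivative f (at p) e + frechet_derivative g (at p) e)" by (rule Suc.IH)
    then show "Ck k (\<lambda>p. frechet_derivative (\<lambda>p. f p + g p) (at p) e)" by (simp only: eq)
  qed
qed

lemma Ck_mult:
  fixes f g :: "'a::real_normed_vector \<Rightarrow> 'b::real_normed_algebra"
  shows "Ck k f \<Longrightarrow> Ck k g \<Longrightarrow> Ck k (\<lambda>p. f p * g p)"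
proof (induction k arbitrary: f g)
  case 0 then show ?case unfolding Ck.simps by (rule continuous_on_mult)
next
  case (Suc k)
  have df: "\<And>p. f differentiable (at p)" and dg: "\<And>p. g differentiable (at p)" using Suc.prems unfolding Ck.simps by blast+
  have eq: "frechet_derivative (\<lambda>p. f p * g p) (at p) e = f p * frechet_derivative g (at p) e + frechet_derivative f (at p) e * g p" for p e
  proof -
    have "((\<lambda>p. f p * g p) has_derivative (\<lambda>h. f p * frechet_derivative g (at p) h + frechet_derivative f (at p) h * g p)) (at p)"
      using has_derivative_mult[OF df[of p, unfolded frechet_derivative_works] dg[of p, unfolded frechet_derivative_works]] .
    from fun_cong[OF frechet_derivative_at[OF this], of e] show ?thesis by simp
  qed
  have fk: "Ck k f" "Ck k g" using Suc.prems Ck_Suc_imp by blast+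
  show ?case
  proof (simp only: Ck.simps, intro conjI allI)
    fix p show "(\<lambda>p. f p * g p) differentiable at p" using df dg by (rule differentiable_mult)
  next
    fix e
    have "Ck k (\<lambda>p. frechet_derivative f (at p) e)" "Ck k (\<lambda>p. frechet_derivative g (at p) e)"
      using Suc.prems unfolding Ck.simps by blast+
    then have "Ck k (\<lambda>p. f p * frechet_derivative g (at p) e + frechet_derivative f (at p) e * g p)"
      using fk Suc.IH Ck_add[of k "\<lambda>p. f p * frechet_derivative g (at p) e" "\<lambda>p. frechet_derivative f (at p) e * g p"] by blast
    then show "Ck k (\<lambda>p. frechet_derivative (\<lambda>p. f p * g p) (at p) e)" by (simp only: eq)
  qed
qed

lemma smooth_const: "smooth (\<lambda>p. c)" by (simp add: smooth_def Ck_const)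
lemma smooth_linear: "bounded_linear L \<Longrightarrow> smooth L" by (simp add: smooth_def Ck_linear)
lemma smooth_add: "smooth f \<Longrightarrow> smooth g \<Longrightarrow> smooth (\<lambda>p. f p + g p)" by (simp add: smooth_def Ck_add)
lemma smooth_mult:
  fixes f g :: "'a::real_normed_vector \<Rightarrow> 'b::real_normed_algebra"
  shows "smooth f \<Longrightarrow> smooth g \<Longrightarrow> smooth (\<lambda>p. f p * g p)" by (simp add: smooth_def Ck_mult)

lemma smooth_diffble: "smooth f \<Longrightarrow> f differentiable (at p)"
  unfolding smooth_def using Ck.simps(2)[of 0 f] by blast
lemma smooth_hasd: "smooth f \<Longrightarrow> (f has_derivative frechet_derivative f (at p)) (at p)"
  using smooth_diffble frechet_derivative_works by blast
lemma smooth_fd: "smooth f \<Longrightarrow> smooth (\<lambda>p. frechet_derivative f (at p) e)"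
  unfolding smooth_def using Ck.simps(2) by blast
lemma smooth_isCont: "smooth f \<Longrightarrow> isCont f p"
  using smooth_diffble differentiable_imp_continuous_within by blast
lemma smooth_lin: "smooth f \<Longrightarrow> linear (frechet_derivative f (at p))"
  using smooth_hasd has_derivative_linear by blast

lemma smooth_curve:
  assumes "smooth G" "(c has_vector_derivative c') (at s)"
  shows "((\<lambda>s. G (c s)) has_vector_derivative frechet_derivative G (at (c s)) c') (at s)"
proof -
  have "(G has_derivative frechet_derivative G (at (c s))) (at (c s) within range c)"
    using smooth_hasd[OF assms(1)] has_derivative_at_withinI by blast
  from vector_derivative_diff_chain_within[OF assms(2) this]
  show ?thesis by (simp add: o_def)
qed

lemma mvt':
  fixes f f' :: "real \<Rightarrow> real"
  assumes "a < b" "\<And>x. (f has_real_derivative f' x) (at x)"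
  shows "\<exists>z. a < z \<and> z < b \<and> f b - f a = (b - a) * f' z"
proof -
  have "continuous_on {a..b} f"
    using assms(2) by (meson DERIV_isCont continuous_at_imp_continuous_on)
  moreover have "\<And>x. f differentiable (at x)" using assms(2) real_differentiable_def
    by (meson differentiable_def has_field_derivative_def)
  ultimately obtain l z where "a < z" "z < b" "DERIV f z :> l" "f b - f a = (b - a) * l"
    using MVT[OF assms(1)] by blast
  moreover have "l = f' z" using DERIV_unique[OF \<open>DERIV f z :> l\<close> assms(2)] .
  ultimately show ?thesis by blast
qed

lemma schwarz_real:
  fixes f fx fy fxy fyx :: "real \<Rightarrow> real \<Rightarrow> real"
  assumes d1: "\<And>x y. ((\<lambda>x. f x y) has_real_derivative fx x y) (at x)"
    and d2: "\<And>x y. ((\<lambda>y. f x y) has_real_derivative fy x y) (at y)"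
    and d3: "\<And>x y. ((\<lambda>y. fx x y) has_real_derivative fxy x y) (at y)"
    and d4: "\<And>x y. ((\<lambda>x. fy x y) has_real_derivative fyx x y) (at x)"
    and c1: "isCont (\<lambda>(x,y). fxy x y) (a,b)"
    and c2: "isCont (\<lambda>(x,y). fyx x y) (a,b)"
  shows "fxy a b = fyx a b"
proof (rule ccontr)
  assume ne: "fxy a b \<noteq> fyx a b"
  define d where "d = \<bar>fxy a b - fyx a b\<bar>"
  have d: "d > 0" using ne by (simp add: d_def)
  obtain e1 where e1: "e1 > 0" "\<And>q. dist q (a,b) < e1 \<Longrightarrow> dist ((\<lambda>(x,y). fxy x y) q) (fxy a b) < d/2"
    using c1[unfolded continuous_at_eps_delta] d by (metis (no_types, lifting) case_prod_conv half_gt_zero)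
  obtain e2 where e2: "e2 > 0" "\<And>q. dist q (a,b) < e2 \<Longrightarrow> dist ((\<lambda>(x,y). fyx x y) q) (fyx a b) < d/2"
    using c2[unfolded continuous_at_eps_delta] d by (metis (no_types, lifting) case_prod_conv half_gt_zero)
  define h where "h = min e1 e2 / 2"
  have h: "h > 0" "2*h \<le> e1" "2*h \<le> e2" using e1 e2 by (auto simp: h_def)
  have close: "dist (u,v) (a,b) < 2*h" if "a < u" "u < a + h" "b < v" "v < b + h" for u v
  proof -
    have "dist (u,v) (a,b) = sqrt ((u-a)^2 + (v-b)^2)" by (simp add: dist_Pair_Pair dist_real_def)
    also have "\<dots> \<le> \<bar>u-a\<bar> + \<bar>v-b\<bar>" by (rule sqrt_sum_squares_le_sum_abs)
    also have "\<dots> < 2*h" using that by auto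
    finally show ?thesis .
  qed
  define D where "D = f (a+h) (b+h) - f (a+h) b - f a (b+h) + f a b"
  obtain x1 where x1: "a < x1" "x1 < a+h"
      "(\<lambda>x. f x (b+h) - f x b) (a+h) - (\<lambda>x. f x (b+h) - f x b) a = ((a+h) - a) * (fx x1 (b+h) - fx x1 b)"
  proof -
    have "((\<lambda>x. f x (b+h) - f x b) has_real_derivative fx x (b+h) - fx x b) (at x)" for x
      using d1 d1 by (rule DERIV_diff)
    from mvt'[of a "a+h", OF _ this] h show ?thesis using that by auto
  qed
  obtain y1 where y1: "b < y1" "y1 < b+h" "fx x1 (b+h) - fx x1 b = ((b+h) - b) * fxy x1 y1"
    using mvt'[of b "b+h" "\<lambda>y. fx x1 y" "\<lambda>y. fxy x1 y"] h d3 by auto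
  obtain y2 where y2: "b < y2" "y2 < b+h"
      "(\<lambda>y. f (a+h) y - f a y) (b+h) - (\<lambda>y. f (a+h) y - f a y) b = ((b+h) - b) * (fy (a+h) y2 - fy a y2)"
  proof -
    have "((\<lambda>y. f (a+h) y - f a y) has_real_derivative fy (a+h) y - fy a y) (at y)" for y
      using d2 d2 by (rule DERIV_diff)
    from mvt'[of b "b+h", OF _ this] h show ?thesis using that by auto
  qed
  obtain x2 where x2: "a < x2" "x2 < a+h" "fy (a+h) y2 - fy a y2 = ((a+h) - a) * fyx x2 y2"
    using mvt'[of a "a+h" "\<lambda>x. fy x y2" "\<lambda>x. fyx x y2"] h d4 by auto
  have "D = h * h * fxy x1 y1" using x1(3) y1(3) by (simp add: D_def algebra_simps)
  moreover have "D = h * h * fyx x2 y2" using y2(3) x2(3) by (simp add: D_def algebra_simps)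
  ultimately have eq: "fxy x1 y1 = fyx x2 y2" using h by simp
  have "dist (fxy x1 y1) (fxy a b) < d/2"
    using e1(2)[of "(x1,y1)"] close[of x1 y1] x1 y1 h by simp
  moreover have "dist (fyx x2 y2) (fyx a b) < d/2"
    using e2(2)[of "(x2,y2)"] close[of x2 y2] x2 y2 h by simp
  ultimately have "\<bar>fxy a b - fyx a b\<bar> < d" using eq unfolding dist_real_def by linarith
  then show False by (simp add: d_def)
qed

lemma vd_Re: "(g has_vector_derivative g') F \<Longrightarrow> ((\<lambda>x. Re (g x)) has_real_derivative Re g') F"
  using bounded_linear.has_vector_derivative[OF bounded_linear_Re]
  by (simp add: has_real_derivative_iff_has_vector_derivative)
lemma vd_Im: "(g has_vector_derivative g') F \<Longrightarrow> ((\<lambda>x. Im (g x)) has_real_derivative Im g') F"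
  using bounded_linear.has_vector_derivative[OF bounded_linear_Im]
  by (simp add: has_real_derivative_iff_has_vector_derivative)

lemma curve_t: "((\<lambda>s. (s, x)) has_vector_derivative (1::real, 0::real)) (at s)"
  by (intro has_vector_derivative_Pair has_vector_derivative_id has_vector_derivative_const)
lemma curve_x: "((\<lambda>y. (t, y)) has_vector_derivative (0::real, 1::real)) (at y)"
  by (intro has_vector_derivative_Pair has_vector_derivative_id has_vector_derivative_const)

lemma hvd_T:
  fixes f :: "real \<Rightarrow> real \<Rightarrow> 'b::real_normed_vector"
  assumes "smooth (\<lambda>(t,x). f t x)"
  shows "((\<lambda>s. f s x) has_vector_derivative frechet_derivative (\<lambda>(t,x). f t x) (at (s,x)) (1,0)) (at s)"
  using smooth_curve[OF assms curve_t[of x s]] by simp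

lemma hvd_X:
  fixes f :: "real \<Rightarrow> real \<Rightarrow> 'b::real_normed_vector"
  assumes "smooth (\<lambda>(t,x). f t x)"
  shows "((\<lambda>y. f t y) has_vector_derivative frechet_derivative (\<lambda>(t,x). f t x) (at (t,y)) (0,1)) (at y)"
  using smooth_curve[OF assms curve_x[of t y]] by simp

lemma dT_eq: "smooth (\<lambda>(t,x). f t x) \<Longrightarrow> dT f s x = frechet_derivative (\<lambda>(t,x). f t x) (at (s,x)) (1,0)"
  unfolding dT_def by (rule vector_derivative_at[OF hvd_T])
lemma dX_eq: "smooth (\<lambda>(t,x). f t x) \<Longrightarrow> dX f t y = frechet_derivative (\<lambda>(t,x). f t x) (at (t,y)) (0,1)"
  unfolding dX_def by (rule vector_derivative_at[OF hvd_X])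

lemma dT_hvd: "smooth (\<lambda>(t,x). f t x) \<Longrightarrow> ((\<lambda>s. f s x) has_vector_derivative dT f s x) (at s)"
  using hvd_T dT_eq by metis
lemma dX_hvd: "smooth (\<lambda>(t,x). f t x) \<Longrightarrow> ((\<lambda>y. f t y) has_vector_derivative dX f t y) (at y)"
  using hvd_X dX_eq by metis

lemma dT_smooth: assumes "smooth (\<lambda>(t,x). f t x)" shows "smooth (\<lambda>(t,x). dT f t x)"
proof -
  have "(\<lambda>(t,x). dT f t x) = (\<lambda>p. frechet_derivative (\<lambda>(t,x). f t x) (at p) (1,0))"
    using dT_eq[OF assms] by (auto simp: fun_eq_iff)
  then show ?thesis using smooth_fd[OF assms] by simp
qed
lemma dX_smooth: assumes "smooth (\<lambda>(t,x). f t x)" shows "smooth (\<lambda>(t,x). dX f t x)"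
proof -
  have "(\<lambda>(t,x). dX f t x) = (\<lambda>p. frechet_derivative (\<lambda>(t,x). f t x) (at p) (0,1))"
    using dX_eq[OF assms] by (auto simp: fun_eq_iff)
  then show ?thesis using smooth_fd[OF assms] by simp
qed

lemma isCont_Re2: "smooth (\<lambda>(t,x). g t x) \<Longrightarrow> isCont (\<lambda>(x,y). Re (g x y)) p"
proof -
  assume "smooth (\<lambda>(t,x). g t x)"
  then have "isCont (\<lambda>(t,x). g t x) p" by (rule smooth_isCont)
  then have "isCont (\<lambda>p. Re ((\<lambda>(t,x). g t x) p)) p" by (rule continuous_Re)
  then show ?thesis by (simp add: case_prod_beta')
qed
lemma isCont_Im2: "smooth (\<lambda>(t,x). g t x) \<Longrightarrow> isCont (\<lambda>(x,y). Im (g x y)) p"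
proof -
  assume "smooth (\<lambda>(t,x). g t x)"
  then have "isCont (\<lambda>(t,x). g t x) p" by (rule smooth_isCont)
  then have "isCont (\<lambda>p. Im ((\<lambda>(t,x). g t x) p)) p" by (rule continuous_Im)
  then show ?thesis by (simp add: case_prod_beta')
qed

lemma schwarz_c:
  fixes f :: "real \<Rightarrow> real \<Rightarrow> complex"
  assumes sm: "smooth (\<lambda>(t,x). f t x)"
  shows "dX (dT f) a b = dT (dX f) a b"
proof -
  have smT: "smooth (\<lambda>(t,x). dT f t x)" and smX: "smooth (\<lambda>(t,x). dX f t x)"
    using dT_smooth[OF sm] dX_smooth[OF sm] .
  have smXT: "smooth (\<lambda>(t,x). dX (dT f) t x)" and smTX: "smooth (\<lambda>(t,x). dT (dX f) t x)"
    using dX_smooth[OF smT] dT_smooth[OF smX] .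
  have "Re (dX (dT f) a b) = Re (dT (dX f) a b)"
    by (rule schwarz_real[where f="\<lambda>a b. Re (f a b)" and fx="\<lambda>a b. Re (dT f a b)" and fy="\<lambda>a b. Re (dX f a b)"])
       (intro vd_Re dT_hvd dX_hvd sm smT smX isCont_Re2 smXT smTX)+
  moreover have "Im (dX (dT f) a b) = Im (dT (dX f) a b)"
    by (rule schwarz_real[where f="\<lambda>a b. Im (f a b)" and fx="\<lambda>a b. Im (dT f a b)" and fy="\<lambda>a b. Im (dX f a b)"])
       (intro vd_Im dT_hvd dX_hvd sm smT smX isCont_Im2 smXT smTX)+
  ultimately show ?thesis by (rule complex_eqI)
qed

lemma lin_hvd: "((\<lambda>s. 1 + complex_of_real s * w) has_vector_derivative w) (at s0)"
  using has_vector_derivative_add[OF has_vector_derivative_const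
        has_vector_derivative_mult_left[OF has_vector_derivative_of_real[OF DERIV_ident], of w]] by simp

lemma norm_hvd1: "((\<lambda>s. cmod (1 + complex_of_real s * w)) has_real_derivative Re w) (at 0)"
proof -
  have c: "((\<lambda>s. 1 + complex_of_real s * w) has_vector_derivative w) (at 0)"
    using has_vector_derivative_add[OF has_vector_derivative_const
        has_vector_derivative_mult_left[OF has_vector_derivative_of_real[OF DERIV_ident], of w]] by simp
  have n: "(norm has_derivative (\<lambda>h. h \<bullet> sgn (1::complex))) (at ((\<lambda>s. 1 + complex_of_real s * w) 0))"
    using has_derivative_norm[of "1::complex"] by simp
  have "(norm has_derivative (\<lambda>h. h \<bullet> sgn (1::complex))) (at ((\<lambda>s. 1 + complex_of_real s * w) 0) within range (\<lambda>s. 1 + complex_of_real s * w))"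
    using n has_derivative_at_withinI by blast
  from vector_derivative_diff_chain_within[OF c this]
  have "((\<lambda>s. cmod (1 + complex_of_real s * w)) has_vector_derivative w \<bullet> 1) (at 0)" by (simp add: o_def)
  then show ?thesis by (simp add: has_real_derivative_iff_has_vector_derivative complex_inner_1_right)
qed

lemma powr_hvd1: "((\<lambda>s. cmod (1 + complex_of_real s * w) powr g) has_real_derivative g * Re w) (at 0)"
proof -
  have "((\<lambda>z. z powr g) has_real_derivative g * 1 powr (g - 1)) (at (cmod (1 + complex_of_real 0 * w)))"
    using has_real_derivative_powr[of 1 g] by simp
  from DERIV_chain2[OF this norm_hvd1] show ?thesis by simp
qed

lemma dNL_lin:
  "dNL g z (w * z) = (w + complex_of_real (g * Re w)) * NL g z"
proof -
  define r where "r s = cmod (1 + complex_of_real s * w) powr g" for s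
  have eqf: "(\<lambda>s. NL g (z + complex_of_real s * (w * z))) = (\<lambda>s. complex_of_real (r s) * ((1 + complex_of_real s * w) * NL g z))"
  proof
    fix s
    have "z + complex_of_real s * (w * z) = (1 + complex_of_real s * w) * z" by (simp add: algebra_simps)
    moreover have "cmod ((1 + complex_of_real s * w) * z) powr g = r s * cmod z powr g"
      by (simp add: r_def norm_mult powr_mult)
    ultimately show "NL g (z + complex_of_real s * (w * z)) = complex_of_real (r s) * ((1 + complex_of_real s * w) * NL g z)"
      by (simp add: NL_def)
  qed
  have r0: "r 0 = 1" by (simp add: r_def)
  have "((\<lambda>s. complex_of_real (r s) * ((1 + complex_of_real s * w) * NL g z)) has_vector_derivative
        complex_of_real (r 0) * (w * NL g z) + complex_of_real (g * Re w) * ((1 + complex_of_real 0 * w) * NL g z)) (at 0)"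
  proof (rule has_vector_derivative_mult)
    show "((\<lambda>s. complex_of_real (r s)) has_vector_derivative complex_of_real (g * Re w)) (at 0)"
      unfolding r_def by (rule has_vector_derivative_of_real[OF powr_hvd1])
    show "((\<lambda>s. (1 + complex_of_real s * w) * NL g z) has_vector_derivative w * NL g z) (at 0)"
      by (rule has_vector_derivative_mult_left[OF lin_hvd])
  qed
  then show ?thesis unfolding dNL_def eqf using r0
    by (simp add: vector_derivative_at algebra_simps)
qed

lemma smooth2_lin:
  fixes f g :: "real \<Rightarrow> real \<Rightarrow> complex"
  assumes "smooth (\<lambda>(t,x). f t x)" "smooth (\<lambda>(t,x). g t x)"
  shows "smooth (\<lambda>(s,y). c1 * f s y + c2 * g s y)"
proof -
  have "(\<lambda>(s,y). c1 * f s y + c2 * g s y) = (\<lambda>p. (\<lambda>p. c1) p * (\<lambda>(t,x). f t x) p + (\<lambda>p. c2) p * (\<lambda>(t,x). g t x) p)"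
    by (auto simp: fun_eq_iff)
  then show ?thesis using assms by (simp only:) (intro smooth_add smooth_mult smooth_const)
qed

lemma dT_lin:
  fixes f g :: "real \<Rightarrow> real \<Rightarrow> complex"
  assumes "smooth (\<lambda>(t,x). f t x)" "smooth (\<lambda>(t,x). g t x)"
  shows "dT (\<lambda>s y. c1 * f s y + c2 * g s y) t x = c1 * dT f t x + c2 * dT g t x"
  unfolding dT_def[of "\<lambda>s y. c1 * f s y + c2 * g s y"]
  by (rule vector_derivative_at, intro has_vector_derivative_add has_vector_derivative_mult_right dT_hvd assms)

lemma dX_lin:
  fixes f g :: "real \<Rightarrow> real \<Rightarrow> complex"
  assumes "smooth (\<lambda>(t,x). f t x)" "smooth (\<lambda>(t,x). g t x)"
  shows "dX (\<lambda>s y. c1 * f s y + c2 * g s y) t x = c1 * dX f t x + c2 * dX g t x"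
  unfolding dX_def[of "\<lambda>s y. c1 * f s y + c2 * g s y"]
  by (rule vector_derivative_at, intro has_vector_derivative_add has_vector_derivative_mult_right dX_hvd assms)

lemma dX_lin_fun:
  fixes f g :: "real \<Rightarrow> real \<Rightarrow> complex"
  assumes "smooth (\<lambda>(t,x). f t x)" "smooth (\<lambda>(t,x). g t x)"
  shows "dX (\<lambda>s y. c1 * f s y + c2 * g s y) = (\<lambda>s y. c1 * dX f s y + c2 * dX g s y)"
  using dX_lin[OF assms] by (simp add: fun_eq_iff)

lemma sym_ok:
  assumes "smooth V"
  shows "lie_sym \<gamma> V (\<lambda>t x z. b) (\<lambda>t x z. 0) (\<lambda>t x z. \<i> * complex_of_real a * z)"
  unfolding lie_sym_def
proof (intro conjI allI impI)
  have "(\<lambda>(t::real, x::real, z::complex). b) = (\<lambda>p. b)" by auto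
  then show "smooth (\<lambda>(t::real, x::real, z::complex). b)" by (simp add: smooth_const)
  have "(\<lambda>(t::real, x::real, z::complex). 0::real) = (\<lambda>p. 0)" by auto
  then show "smooth (\<lambda>(t::real, x::real, z::complex). 0::real)" by (simp add: smooth_const)
  have "(\<lambda>(t::real, x::real, z::complex). \<i> * complex_of_real a * z) = (\<lambda>p. (\<lambda>p. \<i> * complex_of_real a) p * (\<lambda>p. snd (snd p)) p)"
    by auto
  moreover have "bounded_linear (\<lambda>p::real\<times>real\<times>complex. snd (snd p))"
    using bounded_linear_compose[OF bounded_linear_snd bounded_linear_snd] by (simp add: o_def)
  ultimately show "smooth (\<lambda>(t::real, x::real, z::complex). \<i> * complex_of_real a * z)"
    by (simp only:) (intro smooth_mult smooth_const smooth_linear)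
next
  fix \<psi> :: "real \<Rightarrow> real \<Rightarrow> complex" and t x
  assume H: "smooth (\<lambda>(t, x). \<psi> t x) \<and> \<psi> t x \<noteq> 0 \<and> Delta \<gamma> V \<psi> t x = 0"
  then have sm: "smooth (\<lambda>(t, x). \<psi> t x)" and D0: "Delta \<gamma> V \<psi> t x = 0" by auto
  have smT: "smooth (\<lambda>(t,x). dT \<psi> t x)" using dT_smooth[OF sm] .
  have smX: "smooth (\<lambda>(t,x). dX \<psi> t x)" using dX_smooth[OF sm] .
  have smTT: "smooth (\<lambda>(t,x). dT (dT \<psi>) t x)" using dT_smooth[OF smT] .
  have smXT: "smooth (\<lambda>(t,x). dX (dT \<psi>) t x)" using dX_smooth[OF smT] .
  define c1 where "c1 = \<i> * complex_of_real a"
  define c2 where "c2 = - complex_of_real b"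
  have cq: "charQ (\<lambda>t x z. b) (\<lambda>t x z. 0) (\<lambda>t x z. \<i> * complex_of_real a * z) \<psi>
        = (\<lambda>s y. c1 * \<psi> s y + c2 * dT \<psi> s y)"
    by (simp add: fun_eq_iff charQ_def c1_def c2_def)
  have et: "eta_t (\<lambda>t x z. b) (\<lambda>t x z. 0) (\<lambda>t x z. \<i> * complex_of_real a * z) \<psi> t x = c1 * dT \<psi> t x"
    unfolding eta_t_def cq dT_lin[OF sm smT] by (simp add: c2_def)
  have sch1: "dX (dT \<psi>) = dT (dX \<psi>)" using schwarz_c[OF sm] by (simp add: fun_eq_iff)
  have sch2: "dX (dT (dX \<psi>)) t x = dT (dX (dX \<psi>)) t x" using schwarz_c[OF smX] .
  have exx: "eta_xx (\<lambda>t x z. b) (\<lambda>t x z. 0) (\<lambda>t x z. \<i> * complex_of_real a * z) \<psi> t x = c1 * dX (dX \<psi>) t x"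
    by (unfold eta_xx_def cq dX_lin_fun[OF sm smT], unfold dX_lin[OF smX smXT], unfold sch1 sch2, simp add: c2_def)
  have nl: "dNL \<gamma> (\<psi> t x) (\<i> * complex_of_real a * \<psi> t x) = c1 * NL \<gamma> (\<psi> t x)"
    using dNL_lin[of \<gamma> "\<psi> t x" "\<i> * complex_of_real a"] by (simp add: c1_def)
  show "prQDelta \<gamma> V (\<lambda>t x z. b) (\<lambda>t x z. 0) (\<lambda>t x z. \<i> * complex_of_real a * z) \<psi> t x = 0"
  proof -
    have "prQDelta \<gamma> V (\<lambda>t x z. b) (\<lambda>t x z. 0) (\<lambda>t x z. \<i> * complex_of_real a * z) \<psi> t x
        = c1 * Delta \<gamma> V \<psi> t x"
      unfolding prQDelta_def et exx nl Delta_def by (simp add: c1_def algebra_simps)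
    then show ?thesis using D0 by simp
  qed
qed

lemma cis_hvd: "(cis has_vector_derivative (\<i> * cis th)) (at th)"
proof -
  have e: "cis = (\<lambda>th. complex_of_real (cos th) + \<i> * complex_of_real (sin th))"
    by (auto simp: fun_eq_iff complex_eq_iff)
  have "((\<lambda>th. complex_of_real (cos th) + \<i> * complex_of_real (sin th)) has_vector_derivative
          complex_of_real (- sin th) + \<i> * complex_of_real (cos th)) (at th)"
    by (intro has_vector_derivative_add has_vector_derivative_mult_right has_vector_derivative_of_real
        DERIV_cos DERIV_sin)
  moreover have "complex_of_real (- sin th) + \<i> * complex_of_real (cos th) = \<i> * cis th"
    by (simp add: complex_eq_iff)
  ultimately show ?thesis by (simp only: e)
qed

lemma curve3_t: "((\<lambda>s. (s, x, z)) has_vector_derivative (1::real, 0::real, 0::complex)) (at s)"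
  by (intro has_vector_derivative_Pair has_vector_derivative_id has_vector_derivative_const)
lemma curve3_x: "((\<lambda>y. (t, y, z)) has_vector_derivative (0::real, 1::real, 0::complex)) (at y)"
  by (intro has_vector_derivative_Pair has_vector_derivative_id has_vector_derivative_const)
lemma curve3_A: "((\<lambda>s. (s, x, z + complex_of_real (s - t) * \<alpha>)) has_vector_derivative (1::real, 0::real, \<alpha>)) (at s)"
proof -
  have "((\<lambda>s. z + complex_of_real (s - t) * \<alpha>) has_vector_derivative 0 + complex_of_real (1 - 0) * \<alpha>) (at s)"
    by (intro has_vector_derivative_add has_vector_derivative_const has_vector_derivative_mult_left
        has_vector_derivative_of_real DERIV_diff DERIV_ident DERIV_const)
  then show ?thesis
    by (intro has_vector_derivative_Pair has_vector_derivative_id has_vector_derivative_const) simp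
qed
lemma curve3_c: "((\<lambda>th. (t, x, cis th)) has_vector_derivative (0::real, 0::real, \<i> * cis th)) (at th)"
  by (intro has_vector_derivative_Pair has_vector_derivative_const cis_hvd)

lemma hvd3_t: "smooth (\<lambda>(t,x,z). G t x z) \<Longrightarrow>
  ((\<lambda>s. G s x z) has_vector_derivative frechet_derivative (\<lambda>(t,x,z). G t x z) (at (s,x,z)) (1,0,0)) (at s)"
  for G :: "real \<Rightarrow> real \<Rightarrow> complex \<Rightarrow> 'b::real_normed_vector"
  using smooth_curve[OF _ curve3_t, of "\<lambda>(t,x,z). G t x z" x z s] by simp
lemma hvd3_x: "smooth (\<lambda>(t,x,z). G t x z) \<Longrightarrow>
  ((\<lambda>y. G t y z) has_vector_derivative frechet_derivative (\<lambda>(t,x,z). G t x z) (at (t,y,z)) (0,1,0)) (at y)"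
  for G :: "real \<Rightarrow> real \<Rightarrow> complex \<Rightarrow> 'b::real_normed_vector"
  using smooth_curve[OF _ curve3_x, of "\<lambda>(t,x,z). G t x z" t z y] by simp
lemma hvd3_A: "smooth (\<lambda>(t,x,z). G t x z) \<Longrightarrow>
  ((\<lambda>s. G s x (z + complex_of_real (s - t) * \<alpha>)) has_vector_derivative
     frechet_derivative (\<lambda>(t,x,z). G t x z) (at (s,x,z + complex_of_real (s - t) * \<alpha>)) (1,0,\<alpha>)) (at s)"
  for G :: "real \<Rightarrow> real \<Rightarrow> complex \<Rightarrow> 'b::real_normed_vector"
  using smooth_curve[OF _ curve3_A, of "\<lambda>(t,x,z). G t x z" x z t \<alpha> s] by simp
lemma hvd3_c: "smooth (\<lambda>(t,x,z). G t x z) \<Longrightarrow>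
  ((\<lambda>th. G t x (cis th)) has_vector_derivative
     frechet_derivative (\<lambda>(t,x,z). G t x z) (at (t,x,cis th)) (0,0,\<i> * cis th)) (at th)"
  for G :: "real \<Rightarrow> real \<Rightarrow> complex \<Rightarrow> 'b::real_normed_vector"
  using smooth_curve[OF _ curve3_c, of "\<lambda>(t,x,z). G t x z" t x th] by simp

lemma smooth_fd3: "smooth (\<lambda>(t,x,z). G t x z) \<Longrightarrow>
  smooth (\<lambda>(t,x,z). frechet_derivative (\<lambda>(t,x,z). G t x z) (at (t,x,z)) v)"
  for G :: "real \<Rightarrow> real \<Rightarrow> complex \<Rightarrow> 'b::real_normed_vector"
proof -
  assume "smooth (\<lambda>(t,x,z). G t x z)"
  from smooth_fd[OF this, of v] show ?thesis by (simp add: case_prod_beta')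
qed

lemma fd_lin3:
  fixes G :: "real \<times> real \<times> complex \<Rightarrow> 'b::real_normed_vector" and c :: complex
  assumes "smooth G"
  shows "frechet_derivative G (at p) (a, b, c) =
     a *\<^sub>R frechet_derivative G (at p) (1,0,0) + b *\<^sub>R frechet_derivative G (at p) (0,1,0)
     + frechet_derivative G (at p) (0,0,c)"
proof -
  have l: "linear (frechet_derivative G (at p))" by (rule smooth_lin[OF assms])
  have "(a, b, c) = a *\<^sub>R (1::real,0::real,0::complex) + b *\<^sub>R (0,1,0) + (0,0,c)" by simp
  then show ?thesis by (simp only: linear_add[OF l] linear_scale[OF l])
qed

lemma fd_neg3:
  fixes G :: "real \<times> real \<times> complex \<Rightarrow> 'b::real_normed_vector" and c :: complex
  assumes "smooth G"
  shows "frechet_derivative G (at p) (0, 0, - c) = - frechet_derivative G (at p) (0,0,c)"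
proof -
  have l: "linear (frechet_derivative G (at p))" by (rule smooth_lin[OF assms])
  have "frechet_derivative G (at p) (0::real, 0::real, - c) = frechet_derivative G (at p) ((-1::real) *\<^sub>R (0,0,c))" by simp
  also have "\<dots> = (-1::real) *\<^sub>R frechet_derivative G (at p) (0,0,c)" by (rule linear_scale[OF l])
  finally show ?thesis by simp
qed

lemma fd_zero3:
  assumes "smooth G"
  shows "frechet_derivative G (at p) 0 = 0"
  using linear_0[OF smooth_lin[OF assms]] .

lemma cont_seq:
  fixes F :: "real \<times> real \<times> complex \<Rightarrow> 'b::real_normed_vector"
  assumes "isCont F (t, x, 0)"
  shows "(\<lambda>n. F (t, x, complex_of_real (inverse (real (Suc n))))) \<longlonglongrightarrow> F (t, x, 0)"
proof -
  have "(\<lambda>n. (t, x, complex_of_real (inverse (real (Suc n))))) \<longlonglongrightarrow> (t, x, complex_of_real 0)"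
    by (intro tendsto_intros LIMSEQ_inverse_real_of_nat)
  then show ?thesis using isCont_tendsto_compose[OF assms] by simp
qed

lemma smooth_affine_c: "smooth (\<lambda>y::real. c + complex_of_real y * d)"
  apply (rule smooth_add[where f="\<lambda>y. c"])
   apply (rule smooth_const)
  apply (rule smooth_mult[where f="\<lambda>y. complex_of_real y"])
   apply (rule smooth_linear, rule bounded_linear_of_real)
  apply (rule smooth_const)
  done

lemma dT_constfun[simp]: "dT (\<lambda>s y. c) = (\<lambda>s y. 0)" by (simp add: fun_eq_iff dT_def)
lemma dX_constfun[simp]: "dX (\<lambda>s y. c) = (\<lambda>s y. 0)" by (simp add: fun_eq_iff dX_def)
lemma smooth2_const: "smooth (\<lambda>(s::real, y::real). c)"
proof -
  have "(\<lambda>(s::real, y::real). c) = (\<lambda>p. c)" by auto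
  then show ?thesis by (simp add: smooth_const)
qed

lemma cont_zero:
  fixes f :: "real \<Rightarrow> real \<Rightarrow> complex \<Rightarrow> 'b::real_normed_vector"
  assumes "smooth (\<lambda>(t,x,z). f t x z)" "\<And>z. z \<noteq> 0 \<Longrightarrow> f t x z = c"
  shows "f t x 0 = c"
proof -
  have "(\<lambda>n. (\<lambda>(t,x,z). f t x z) (t, x, complex_of_real (inverse (real (Suc n))))) \<longlonglongrightarrow> (\<lambda>(t,x,z). f t x z) (t, x, 0)"
    by (rule cont_seq[OF smooth_isCont[OF assms(1)]])
  moreover have "(\<lambda>n. (\<lambda>(t,x,z). f t x z) (t, x, complex_of_real (inverse (real (Suc n))))) = (\<lambda>n. c)"
  proof -
    have "f t x (complex_of_real (inverse (real (Suc n)))) = c" for n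
    proof (rule assms(2))
      have "inverse (real (Suc n)) \<noteq> 0" by simp
      then show "complex_of_real (inverse (real (Suc n))) \<noteq> 0" by (simp only: of_real_eq_0_iff not_False_eq_True)
    qed
    then show ?thesis by (simp only: fun_eq_iff case_prod_conv) blast
  qed
  ultimately have "(\<lambda>n. c) \<longlonglongrightarrow> f t x 0" by simp
  from LIMSEQ_unique[OF tendsto_const this] show ?thesis by simp
qed

locale LS =
  fixes \<gamma> :: real and \<tau> \<xi> :: "real \<Rightarrow> real \<Rightarrow> complex \<Rightarrow> real"
    and \<eta> :: "real \<Rightarrow> real \<Rightarrow> complex \<Rightarrow> complex"
  assumes gam: "\<gamma> \<noteq> 0" and ls: "\<And>V. smooth V \<Longrightarrow> lie_sym \<gamma> V \<tau> \<xi> \<eta>"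
begin

lemma smT: "smooth (\<lambda>(t,x,z). \<tau> t x z)"
  using ls[OF smooth_const[of 0]] unfolding lie_sym_def by blast
lemma smXi: "smooth (\<lambda>(t,x,z). \<xi> t x z)"
  using ls[OF smooth_const[of 0]] unfolding lie_sym_def by blast
lemma smE: "smooth (\<lambda>(t,x,z). \<eta> t x z)"
  using ls[OF smooth_const[of 0]] unfolding lie_sym_def by blast

lemma crit:
  assumes "smooth V" "smooth (\<lambda>(s,y). \<psi> s y)" "\<psi> t x \<noteq> 0" "Delta \<gamma> V \<psi> t x = 0"
  shows "prQDelta \<gamma> V \<tau> \<xi> \<eta> \<psi> t x = 0"
  using ls[OF assms(1)] assms(2-4) unfolding lie_sym_def by blast

lemma xi_nz:
  assumes z: "z \<noteq> 0"
  shows "\<xi> t x z = 0"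
proof -
  define N where "N = NL \<gamma> z / z"
  define V1 where "V1 = (\<lambda>y::real. - N + complex_of_real y * 0)"
  define V2 where "V2 = (\<lambda>y::real. (- N - complex_of_real x) + complex_of_real y * 1)"
  have sV1: "smooth V1" unfolding V1_def by (rule smooth_affine_c)
  have sV2: "smooth V2" unfolding V2_def by (rule smooth_affine_c)
  have d1: "vector_derivative V1 (at x) = 0" unfolding V1_def by simp
  have "(V2 has_vector_derivative (0 + complex_of_real 1 * 1)) (at x)" unfolding V2_def
    by (intro has_vector_derivative_add has_vector_derivative_const has_vector_derivative_mult_left
        has_vector_derivative_of_real DERIV_ident)
  then have d2: "vector_derivative V2 (at x) = 1" by (simp add: vector_derivative_at)
  have v1: "V1 x = - N" and v2: "V2 x = - N" by (simp_all add: V1_def V2_def)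
  have D1: "Delta \<gamma> V1 (\<lambda>s y. z) t x = 0" using z by (simp add: Delta_def v1 N_def)
  have D2: "Delta \<gamma> V2 (\<lambda>s y. z) t x = 0" using z by (simp add: Delta_def v2 N_def)
  have P1: "prQDelta \<gamma> V1 \<tau> \<xi> \<eta> (\<lambda>s y. z) t x = 0" by (rule crit[OF sV1 smooth2_const z D1])
  have P2: "prQDelta \<gamma> V2 \<tau> \<xi> \<eta> (\<lambda>s y. z) t x = 0" by (rule crit[OF sV2 smooth2_const z D2])
  have "prQDelta \<gamma> V2 \<tau> \<xi> \<eta> (\<lambda>s y. z) t x - prQDelta \<gamma> V1 \<tau> \<xi> \<eta> (\<lambda>s y. z) t x
        = complex_of_real (\<xi> t x z) * z"
    unfolding prQDelta_def d1 d2 v1 v2 by simp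
  then have "complex_of_real (\<xi> t x z) * z = 0" using P1 P2 by simp
  then show ?thesis using z by simp
qed

lemma xi0: "\<xi> = (\<lambda>t x z. 0)"
proof (intro ext)
  fix t x z
  show "\<xi> t x z = 0"
  proof (cases "z = 0")
    case True
    then show ?thesis using cont_zero[OF smXi, of t x 0] xi_nz by blast
  next
    case False then show ?thesis by (rule xi_nz)
  qed
qed

end

lemma hvd_ofreal: "(f has_vector_derivative f') F \<Longrightarrow> ((\<lambda>x. complex_of_real (f x)) has_vector_derivative complex_of_real f') F"
  for f :: "real \<Rightarrow> real"
  using has_vector_derivative_of_real[of f f' F] by (simp add: has_real_derivative_iff_has_vector_derivative)

lemma dT3: "smooth (\<lambda>(t,x,z). G t x z) \<Longrightarrow> dT (\<lambda>s y. G s y z) t x = frechet_derivative (\<lambda>(t,x,z). G t x z) (at (t,x,z)) (1,0,0)"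
  for G :: "real \<Rightarrow> real \<Rightarrow> complex \<Rightarrow> complex"
  unfolding dT_def by (rule vector_derivative_at[OF hvd3_t])
lemma dX3: "smooth (\<lambda>(t,x,z). G t x z) \<Longrightarrow> dX (\<lambda>s y. G s y z) = (\<lambda>s y. frechet_derivative (\<lambda>(t,x,z). G t x z) (at (s,y,z)) (0,1,0))"
  for G :: "real \<Rightarrow> real \<Rightarrow> complex \<Rightarrow> complex"
  unfolding dX_def by (intro ext vector_derivative_at[OF hvd3_x])

lemma smooth2_A: "smooth (\<lambda>(s::real, y::real). z + complex_of_real (s - t) * \<alpha>)"
proof -
  have e: "(\<lambda>(s::real, y::real). z + complex_of_real (s - t) * \<alpha>) =
      (\<lambda>p. (\<lambda>p. z - complex_of_real t * \<alpha>) p + (\<lambda>p. complex_of_real (fst p)) p * (\<lambda>p. \<alpha>) p)"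
    by (auto simp: fun_eq_iff algebra_simps)
  have b: "bounded_linear (\<lambda>p::real\<times>real. complex_of_real (fst p))"
    using bounded_linear_compose[OF bounded_linear_of_real bounded_linear_fst] by (simp add: o_def)
  show ?thesis unfolding e by (intro smooth_add smooth_mult smooth_const smooth_linear b)
qed

lemma smooth2_M: "smooth (\<lambda>(s::real, y::real). z + complex_of_real (s - t) * complex_of_real (y - x))"
proof -
  have e: "(\<lambda>(s::real, y::real). z + complex_of_real (s - t) * complex_of_real (y - x)) =
      (\<lambda>p. (\<lambda>p. z) p + ((\<lambda>p. - complex_of_real t) p + (\<lambda>p. complex_of_real (fst p)) p)
                      * ((\<lambda>p. - complex_of_real x) p + (\<lambda>p. complex_of_real (snd p)) p))"
    by (auto simp: fun_eq_iff algebra_simps)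
  have b: "bounded_linear (\<lambda>p::real\<times>real. complex_of_real (fst p))"
    using bounded_linear_compose[OF bounded_linear_of_real bounded_linear_fst] by (simp add: o_def)
  have b2: "bounded_linear (\<lambda>p::real\<times>real. complex_of_real (snd p))"
    using bounded_linear_compose[OF bounded_linear_of_real bounded_linear_snd] by (simp add: o_def)
  show ?thesis unfolding e by (intro smooth_add smooth_mult smooth_const smooth_linear b b2)
qed

lemma dT_A: "dT (\<lambda>s y. z + complex_of_real (s - t) * \<alpha>) = (\<lambda>s y. \<alpha>)"
proof (intro ext)
  fix s y
  have "((\<lambda>s. z + complex_of_real (s - t) * \<alpha>) has_vector_derivative 0 + complex_of_real (1 - 0) * \<alpha>) (at s)"
    by (intro has_vector_derivative_add has_vector_derivative_const has_vector_derivative_mult_left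
        has_vector_derivative_of_real DERIV_diff DERIV_ident DERIV_const)
  then show "dT (\<lambda>s y. z + complex_of_real (s - t) * \<alpha>) s y = \<alpha>"
    unfolding dT_def by (simp add: vector_derivative_at)
qed
lemma dX_A: "dX (\<lambda>s y. z + complex_of_real (s - t) * \<alpha>) = (\<lambda>s y. 0)"
  by (simp add: fun_eq_iff dX_def)

lemma dT_M: "dT (\<lambda>s y. z + complex_of_real (s - t) * complex_of_real (y - x)) = (\<lambda>s y. complex_of_real (y - x))"
proof (intro ext)
  fix s y
  have "((\<lambda>s. z + complex_of_real (s - t) * complex_of_real (y - x)) has_vector_derivative
      0 + complex_of_real (1 - 0) * complex_of_real (y - x)) (at s)"
    by (intro has_vector_derivative_add has_vector_derivative_const has_vector_derivative_mult_left
        has_vector_derivative_of_real DERIV_diff DERIV_ident DERIV_const)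
  then show "dT (\<lambda>s y. z + complex_of_real (s - t) * complex_of_real (y - x)) s y = complex_of_real (y - x)"
    unfolding dT_def by (simp add: vector_derivative_at)
qed
lemma dX_M: "dX (\<lambda>s y. z + complex_of_real (s - t) * complex_of_real (y - x)) = (\<lambda>s y. complex_of_real (s - t))"
proof (intro ext)
  fix s y
  have "((\<lambda>y. z + complex_of_real (s - t) * complex_of_real (y - x)) has_vector_derivative
      0 + complex_of_real (s - t) * complex_of_real (1 - 0)) (at y)"
    by (intro has_vector_derivative_add has_vector_derivative_const has_vector_derivative_mult_right
        has_vector_derivative_of_real DERIV_diff DERIV_ident DERIV_const)
  then show "dX (\<lambda>s y. z + complex_of_real (s - t) * complex_of_real (y - x)) s y = complex_of_real (s - t)"
    unfolding dX_def by (simp add: vector_derivative_at)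
qed
lemma dT_fy: "dT (\<lambda>s y. f y) = (\<lambda>s y. 0)" by (simp add: fun_eq_iff dT_def)
lemma dX_fs: "dX (\<lambda>s y. f s) = (\<lambda>s y. 0)" by (simp add: fun_eq_iff dX_def)

context LS begin

definition "et t x z = frechet_derivative (\<lambda>(t,x,z). \<eta> t x z) (at (t,x,z)) (1,0,0)"
definition "ex t x z = frechet_derivative (\<lambda>(t,x,z). \<eta> t x z) (at (t,x,z)) (0,1,0)"
definition "exx t x z = frechet_derivative (\<lambda>(t,x,z). ex t x z) (at (t,x,z)) (0,1,0)"
definition "ew t x z a = frechet_derivative (\<lambda>(t,x,z). \<eta> t x z) (at (t,x,z)) (0,0,a)"
definition "tt t x z = frechet_derivative (\<lambda>(t,x,z). \<tau> t x z) (at (t,x,z)) (1,0,0)"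
definition "tx t x z = frechet_derivative (\<lambda>(t,x,z). \<tau> t x z) (at (t,x,z)) (0,1,0)"
definition "txx t x z = frechet_derivative (\<lambda>(t,x,z). tx t x z) (at (t,x,z)) (0,1,0)"
definition "tw t x z a = frechet_derivative (\<lambda>(t,x,z). \<tau> t x z) (at (t,x,z)) (0,0,a)"

lemma smEx: "smooth (\<lambda>(t,x,z). ex t x z)" unfolding ex_def by (rule smooth_fd3[OF smE])
lemma smTx: "smooth (\<lambda>(t,x,z). tx t x z)" unfolding tx_def by (rule smooth_fd3[OF smT])

lemma hvd_ex: "((\<lambda>y. \<eta> t y z) has_vector_derivative ex t y z) (at y)"
  unfolding ex_def by (rule hvd3_x[OF smE])
lemma hvd_exx: "((\<lambda>y. ex t y z) has_vector_derivative exx t y z) (at y)"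
  unfolding exx_def by (rule hvd3_x[OF smEx])
lemma hvd_tx: "((\<lambda>y. \<tau> t y z) has_vector_derivative tx t y z) (at y)"
  unfolding tx_def by (rule hvd3_x[OF smT])
lemma hvd_txx: "((\<lambda>y. tx t y z) has_vector_derivative txx t y z) (at y)"
  unfolding txx_def by (rule hvd3_x[OF smTx])
lemma hvd_et: "((\<lambda>s. \<eta> s x z) has_vector_derivative et s x z) (at s)"
  unfolding et_def by (rule hvd3_t[OF smE])
lemma hvd_tt: "((\<lambda>s. \<tau> s x z) has_vector_derivative tt s x z) (at s)"
  unfolding tt_def by (rule hvd3_t[OF smT])
lemma hvd_linx: "((\<lambda>r. complex_of_real (r - x)) has_vector_derivative 1) (at y)"
proof -
  have "((\<lambda>r. r - x) has_real_derivative 1 - 0) (at y)" by (intro DERIV_diff DERIV_ident DERIV_const)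
  from has_vector_derivative_of_real[OF this] show ?thesis by simp
qed

lemma VC_facts:
  "smooth (\<lambda>y::real. c + complex_of_real y * 0)"
  "vector_derivative (\<lambda>y::real. c + complex_of_real y * 0) (at x) = 0"
  by (rule smooth_affine_c) simp

lemma testC:
  assumes z: "z \<noteq> 0"
  shows "\<i> * et t x z + exx t x z + dNL \<gamma> z (\<eta> t x z) - NL \<gamma> z / z * \<eta> t x z = 0"
proof -
  define V where "V = (\<lambda>y::real. - (NL \<gamma> z / z) + complex_of_real y * 0)"
  have sV: "smooth V" and dV: "vector_derivative V (at x) = 0" unfolding V_def by (rule VC_facts)+
  have vx: "V x = - (NL \<gamma> z / z)" by (simp add: V_def)
  have D: "Delta \<gamma> V (\<lambda>s y. z) t x = 0" using z by (simp add: Delta_def vx)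
  have P: "prQDelta \<gamma> V \<tau> \<xi> \<eta> (\<lambda>s y. z) t x = 0" by (rule crit[OF sV smooth2_const z D])
  have cq: "charQ \<tau> \<xi> \<eta> (\<lambda>s y. z) = (\<lambda>s y. \<eta> s y z)" by (simp add: fun_eq_iff charQ_def)
  have e1: "eta_t \<tau> \<xi> \<eta> (\<lambda>s y. z) t x = et t x z"
    unfolding eta_t_def cq dT3[OF smE] et_def by simp
  have dx1: "dX (\<lambda>s y. \<eta> s y z) = (\<lambda>s y. ex s y z)" unfolding dX3[OF smE] ex_def ..
  have e2: "eta_xx \<tau> \<xi> \<eta> (\<lambda>s y. z) t x = exx t x z"
    unfolding eta_xx_def cq dx1 dX3[OF smEx] exx_def by simp
  show ?thesis using P unfolding prQDelta_def e1 e2 dV vx by simp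
qed

lemma testA:
  assumes z: "z \<noteq> 0"
  shows "\<i> * (frechet_derivative (\<lambda>(t,x,z). \<eta> t x z) (at (t,x,z)) (1,0,\<alpha>)
            - complex_of_real (frechet_derivative (\<lambda>(t,x,z). \<tau> t x z) (at (t,x,z)) (1,0,\<alpha>)) * \<alpha>)
         + (exx t x z - complex_of_real (txx t x z) * \<alpha>) + dNL \<gamma> z (\<eta> t x z)
         - (\<i> * \<alpha> + NL \<gamma> z) / z * \<eta> t x z = 0"
proof -
  define \<psi> where "\<psi> = (\<lambda>(s::real) (y::real). z + complex_of_real (s - t) * \<alpha>)"
  define V where "V = (\<lambda>y::real. - ((\<i> * \<alpha> + NL \<gamma> z) / z) + complex_of_real y * 0)"
  have sV: "smooth V" and dV: "vector_derivative V (at x) = 0" unfolding V_def by (rule VC_facts)+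
  have vx: "V x = - ((\<i> * \<alpha> + NL \<gamma> z) / z)" by (simp add: V_def)
  have pz: "\<psi> t x = z" by (simp add: \<psi>_def)
  have dTp: "dT \<psi> = (\<lambda>s y. \<alpha>)" unfolding \<psi>_def by (rule dT_A)
  have dXp: "dX \<psi> = (\<lambda>s y. 0)" unfolding \<psi>_def by (rule dX_A)
  have sp: "smooth (\<lambda>(s,y). \<psi> s y)" unfolding \<psi>_def by (rule smooth2_A)
  have D: "Delta \<gamma> V \<psi> t x = 0" using z unfolding Delta_def pz dTp dXp vx by (simp add: field_simps)
  have P: "prQDelta \<gamma> V \<tau> \<xi> \<eta> \<psi> t x = 0" by (rule crit[OF sV sp _ D]) (simp add: pz z)
  define cq where "cq = charQ \<tau> \<xi> \<eta> \<psi>"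
  have cq': "cq = (\<lambda>s y. \<eta> s y (z + complex_of_real (s - t) * \<alpha>) - complex_of_real (\<tau> s y (z + complex_of_real (s - t) * \<alpha>)) * \<alpha>)"
  proof -
    have "cq = (\<lambda>s y. \<eta> s y (\<psi> s y) - complex_of_real (\<tau> s y (\<psi> s y)) * \<alpha>)"
      by (simp add: fun_eq_iff cq_def charQ_def dTp dXp xi0)
    then show ?thesis by (simp add: \<psi>_def)
  qed
  have h1: "((\<lambda>s. cq s x) has_vector_derivative
      frechet_derivative (\<lambda>(t,x,z). \<eta> t x z) (at (t,x,z + complex_of_real (t - t) * \<alpha>)) (1,0,\<alpha>)
      - complex_of_real (frechet_derivative (\<lambda>(t,x,z). \<tau> t x z) (at (t,x,z + complex_of_real (t - t) * \<alpha>)) (1,0,\<alpha>)) * \<alpha>) (at t)"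
    unfolding cq' by (intro has_vector_derivative_diff has_vector_derivative_mult_left hvd_ofreal hvd3_A smE smT)
  have e1: "eta_t \<tau> \<xi> \<eta> \<psi> t x =
      frechet_derivative (\<lambda>(t,x,z). \<eta> t x z) (at (t,x,z)) (1,0,\<alpha>)
      - complex_of_real (frechet_derivative (\<lambda>(t,x,z). \<tau> t x z) (at (t,x,z)) (1,0,\<alpha>)) * \<alpha>"
    using vector_derivative_at[OF h1] unfolding eta_t_def cq_def[symmetric] dT_def[of cq] dTp
    by (simp add: xi0)
  have dcq: "dX cq t y = ex t y z - complex_of_real (tx t y z) * \<alpha>" for y
  proof -
    have "((\<lambda>r. cq t r) has_vector_derivative ex t y z - complex_of_real (tx t y z) * \<alpha>) (at y)"
      unfolding cq' by (simp, intro has_vector_derivative_diff has_vector_derivative_mult_left hvd_ofreal hvd_ex hvd_tx)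
    then show ?thesis unfolding dX_def by (rule vector_derivative_at)
  qed
  have h2: "((\<lambda>y. dX cq t y) has_vector_derivative exx t x z - complex_of_real (txx t x z) * \<alpha>) (at x)"
    unfolding dcq by (intro has_vector_derivative_diff has_vector_derivative_mult_left hvd_ofreal hvd_exx hvd_txx)
  have e2: "eta_xx \<tau> \<xi> \<eta> \<psi> t x = exx t x z - complex_of_real (txx t x z) * \<alpha>"
    using vector_derivative_at[OF h2] unfolding eta_xx_def cq_def[symmetric] dX_def[of "dX cq"] dXp
    by (simp add: xi0)
  show ?thesis using P unfolding prQDelta_def e1 e2 dV vx pz by (simp add: xi0)
qed

lemma testM:
  assumes z: "z \<noteq> 0"
  shows "tx t x z = 0"
proof -
  define \<psi> where "\<psi> = (\<lambda>s y. z + complex_of_real (s - t) * complex_of_real (y - x))"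
  define V where "V = (\<lambda>y::real. - (NL \<gamma> z / z) + complex_of_real y * 0)"
  have sV: "smooth V" and dV: "vector_derivative V (at x) = 0" unfolding V_def by (rule VC_facts)+
  have vx: "V x = - (NL \<gamma> z / z)" by (simp add: V_def)
  have pz: "\<psi> t x = z" by (simp add: \<psi>_def)
  have dTp: "dT \<psi> = (\<lambda>s y. complex_of_real (y - x))" unfolding \<psi>_def by (rule dT_M)
  have dXp: "dX \<psi> = (\<lambda>s y. complex_of_real (s - t))" unfolding \<psi>_def by (rule dX_M)
  have dXXp: "dX (dX \<psi>) = (\<lambda>s y. 0)" unfolding dXp by (rule dX_fs)
  have dTTp: "dT (dT \<psi>) = (\<lambda>s y. 0)" unfolding dTp by (rule dT_fy)
  have sp: "smooth (\<lambda>(s,y). \<psi> s y)" unfolding \<psi>_def by (rule smooth2_M)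
  have D: "Delta \<gamma> V \<psi> t x = 0" using z unfolding Delta_def pz dTp dXXp vx by simp
  have P: "prQDelta \<gamma> V \<tau> \<xi> \<eta> \<psi> t x = 0" by (rule crit[OF sV sp _ D]) (simp add: pz z)
  define cq where "cq = charQ \<tau> \<xi> \<eta> \<psi>"
  have cq': "cq = (\<lambda>s y. \<eta> s y (\<psi> s y) - complex_of_real (\<tau> s y (\<psi> s y)) * complex_of_real (y - x))"
    by (simp add: fun_eq_iff cq_def charQ_def dTp xi0)
  have cqx: "(\<lambda>s. cq s x) = (\<lambda>s. \<eta> s x z)" by (simp add: cq' \<psi>_def)
  have e1: "eta_t \<tau> \<xi> \<eta> \<psi> t x = et t x z"
    unfolding eta_t_def cq_def[symmetric] dT_def[of cq] cqx dTTp
    using vector_derivative_at[OF hvd_et] by (simp add: xi0)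
  have cqt: "(\<lambda>r. cq t r) = (\<lambda>r. \<eta> t r z - complex_of_real (\<tau> t r z) * complex_of_real (r - x))"
    by (simp add: cq' \<psi>_def)
  have dcq: "dX cq t y = ex t y z - (complex_of_real (\<tau> t y z) * 1 + complex_of_real (tx t y z) * complex_of_real (y - x))" for y
  proof -
    have "((\<lambda>r. cq t r) has_vector_derivative ex t y z - (complex_of_real (\<tau> t y z) * 1 + complex_of_real (tx t y z) * complex_of_real (y - x))) (at y)"
      unfolding cqt by (intro has_vector_derivative_diff has_vector_derivative_mult hvd_ofreal hvd_ex hvd_tx hvd_linx)
    then show ?thesis unfolding dX_def by (rule vector_derivative_at)
  qed
  have h2: "((\<lambda>y. dX cq t y) has_vector_derivative exx t x z -
      (complex_of_real (tx t x z) * 1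
      + (complex_of_real (tx t x z) * 1 + complex_of_real (txx t x z) * complex_of_real (x - x)))) (at x)"
    unfolding dcq
    by (intro has_vector_derivative_diff has_vector_derivative_add has_vector_derivative_mult
        has_vector_derivative_mult_left hvd_ofreal hvd_exx hvd_tx hvd_txx hvd_linx)
  have e2: "eta_xx \<tau> \<xi> \<eta> \<psi> t x = exx t x z - 2 * complex_of_real (tx t x z)"
    using vector_derivative_at[OF h2] unfolding eta_xx_def cq_def[symmetric] dX_def[of "dX cq"] dXXp
    by (simp add: xi0)
  have "\<i> * et t x z + (exx t x z - 2 * complex_of_real (tx t x z)) + dNL \<gamma> z (\<eta> t x z) - NL \<gamma> z / z * \<eta> t x z = 0"
    using P unfolding prQDelta_def e1 e2 dV vx pz by (simp add: xi0)
  with testC[OF z, of t x] show ?thesis by (simp add: algebra_simps)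
qed

end

context LS begin

lemma decE: "frechet_derivative (\<lambda>(t,x,z). \<eta> t x z) (at (t,x,z)) (1,0,a) = et t x z + ew t x z a"
  using fd_lin3[OF smE, of "(t,x,z)" 1 0 a] by (simp add: et_def ew_def)
lemma decT: "frechet_derivative (\<lambda>(t,x,z). \<tau> t x z) (at (t,x,z)) (1,0,a) = tt t x z + tw t x z a"
  using fd_lin3[OF smT, of "(t,x,z)" 1 0 a] by (simp add: tt_def tw_def)
lemma negE: "ew t x z (-a) = - ew t x z a" unfolding ew_def by (rule fd_neg3[OF smE])
lemma negT: "tw t x z (-a) = - tw t x z a" unfolding tw_def by (rule fd_neg3[OF smT])

lemma Feq:
  assumes z: "z \<noteq> 0"
  shows "\<i> * ew t x z a - \<i> * complex_of_real (tt t x z) * a - \<i> * complex_of_real (tw t x z a) * a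
         - complex_of_real (txx t x z) * a - \<i> * a * \<eta> t x z / z = 0"
proof -
  have A: "\<i> * (et t x z + ew t x z a - complex_of_real (tt t x z + tw t x z a) * a)
         + (exx t x z - complex_of_real (txx t x z) * a) + dNL \<gamma> z (\<eta> t x z)
         - (\<i> * a + NL \<gamma> z) / z * \<eta> t x z = 0"
    using testA[OF z, of t x a] unfolding decE decT .
  have C: "\<i> * et t x z + exx t x z + dNL \<gamma> z (\<eta> t x z) - NL \<gamma> z / z * \<eta> t x z = 0"
    by (rule testC[OF z])
  have "\<i> * ew t x z a - \<i> * complex_of_real (tt t x z) * a - \<i> * complex_of_real (tw t x z a) * a
         - complex_of_real (txx t x z) * a - \<i> * a * \<eta> t x z / z
      = (\<i> * (et t x z + ew t x z a - complex_of_real (tt t x z + tw t x z a) * a)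
         + (exx t x z - complex_of_real (txx t x z) * a) + dNL \<gamma> z (\<eta> t x z)
         - (\<i> * a + NL \<gamma> z) / z * \<eta> t x z)
        - (\<i> * et t x z + exx t x z + dNL \<gamma> z (\<eta> t x z) - NL \<gamma> z / z * \<eta> t x z)"
    using z by (simp add: field_simps)
  then show ?thesis unfolding A C by simp
qed

lemma tw0:
  assumes z: "z \<noteq> 0"
  shows "tw t x z a = 0"
proof (cases "a = 0")
  case True
  then show ?thesis unfolding tw_def using fd_zero3[OF smT] by (simp add: zero_prod_def)
next
  case False
  have F1: "\<i> * ew t x z a - \<i> * complex_of_real (tt t x z) * a - \<i> * complex_of_real (tw t x z a) * a
         - complex_of_real (txx t x z) * a - \<i> * a * \<eta> t x z / z = 0" by (rule Feq[OF z])
  have F2: "\<i> * ew t x z (-a) - \<i> * complex_of_real (tt t x z) * (-a) - \<i> * complex_of_real (tw t x z (-a)) * (-a)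
         - complex_of_real (txx t x z) * (-a) - \<i> * (-a) * \<eta> t x z / z = 0" by (rule Feq[OF z])
  have "2 * \<i> * complex_of_real (tw t x z a) * a = 0"
    using F1 F2 unfolding negE negT by (simp add: algebra_simps)
  then show ?thesis using False by simp
qed

lemma ew_rel0:
  assumes z: "z \<noteq> 0"
  shows "ew t x z a = (complex_of_real (tt t x z) - \<i> * complex_of_real (txx t x z) + \<eta> t x z / z) * a"
proof -
  have "\<i> * ew t x z a - \<i> * complex_of_real (tt t x z) * a - complex_of_real (txx t x z) * a - \<i> * a * \<eta> t x z / z = 0"
    using Feq[OF z, of t x a] tw0[OF z] by simp
  then have "\<i> * (ew t x z a - (complex_of_real (tt t x z) - \<i> * complex_of_real (txx t x z) + \<eta> t x z / z) * a) = 0"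
    by (simp add: algebra_simps)
  then show ?thesis by simp
qed

lemma tau_T:
  assumes z: "z \<noteq> 0"
  shows "\<tau> t x z = \<tau> t 0 1"
proof -
  define S where "S = (UNIV :: real set) \<times> (- {0 :: complex})"
  define f where "f = (\<lambda>q::real\<times>complex. \<tau> t (fst q) (snd q))"
  have oS: "open S" unfolding S_def by (intro open_Times open_UNIV open_Compl closed_singleton)
  have cS: "connected S" unfolding S_def
    by (intro connected_Times connected_UNIV connected_punctured_universe) simp
  have "(f has_derivative (\<lambda>h. 0)) (at q)" if "q \<in> S" for q
  proof -
    obtain x' z' where q: "q = (x', z')" by (cases q)
    have z': "z' \<noteq> 0" using that q by (simp add: S_def)
    have l: "((\<lambda>q::real\<times>complex. (t, fst q, snd q)) has_derivative (\<lambda>h. (0, fst h, snd h))) (at q)"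
      by (auto intro!: derivative_eq_intros)
    have g: "((\<lambda>(t,x,z). \<tau> t x z) has_derivative frechet_derivative (\<lambda>(t,x,z). \<tau> t x z) (at (t, fst q, snd q))) (at (t, fst q, snd q))"
      by (rule smooth_hasd[OF smT])
    have "(f has_derivative (\<lambda>h. frechet_derivative (\<lambda>(t,x,z). \<tau> t x z) (at (t, fst q, snd q)) (0, fst h, snd h))) (at q)"
      using has_derivative_compose[OF l g] by (simp add: f_def case_prod_beta')
    moreover have "frechet_derivative (\<lambda>(t,x,z). \<tau> t x z) (at (t, fst q, snd q)) (0, fst h, snd h) = 0" for h
      using fd_lin3[OF smT, of "(t, x', z')" 0 "fst h" "snd h"] testM[OF z', of t x'] tw0[OF z', of t x' "snd h"]
      unfolding q tx_def tw_def by simp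
    ultimately show ?thesis by simp
  qed
  then have "f (x, z) = f (0, 1)"
    by (intro has_derivative_zero_unique_connected[OF oS cS]) (auto simp: S_def z)
  then show ?thesis by (simp add: f_def)
qed

lemma tt_eq:
  assumes z: "z \<noteq> 0"
  shows "tt t x z = tt t 0 1"
proof -
  have "(\<lambda>s. \<tau> s x z) = (\<lambda>s. \<tau> s 0 1)" using tau_T[OF z] by auto
  then show ?thesis using hvd_tt[of x z t] hvd_tt[of 0 1 t] vector_derivative_unique_at by metis
qed

lemma txx0:
  assumes z: "z \<noteq> 0"
  shows "txx t x z = 0"
proof -
  have "(\<lambda>y. tx t y z) = (\<lambda>y. 0)" using testM[OF z] by auto
  then have "((\<lambda>y. tx t y z) has_vector_derivative 0) (at x)" by simp
  then show ?thesis using hvd_txx[of t z x] vector_derivative_unique_at by metis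
qed

lemma ew_rel:
  assumes z: "z \<noteq> 0"
  shows "ew t x z a = (complex_of_real (tt t 0 1) + \<eta> t x z / z) * a"
  using ew_rel0[OF z] tt_eq[OF z] txx0[OF z] by simp

end

lemma cis_neg_hvd: "((\<lambda>th. cis (- th)) has_vector_derivative - (\<i> * cis (- th))) (at th)"
proof -
  have u: "(uminus has_vector_derivative (-1::real)) (at th)"
    using has_vector_derivative_minus[OF has_vector_derivative_id[of "at th"]] by simp
  have "(cis has_vector_derivative \<i> * cis (- th)) (at (- th) within range uminus)"
    using cis_hvd[of "- th"] has_vector_derivative_at_within by blast
  from vector_diff_chain_within[OF u this] show ?thesis by (simp add: o_def)
qed

context LS begin

lemma tt_zero: "tt t 0 1 = 0"
proof -
  define c where "c = tt t 0 1"
  define h where "h = (\<lambda>th. \<eta> t 0 (cis th) * cis (- th))"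
  have hd: "(h has_vector_derivative \<i> * complex_of_real c) (at th)" for th
  proof -
    have cz: "cis th \<noteq> 0" by simp
    have e1: "((\<lambda>th. \<eta> t 0 (cis th)) has_vector_derivative ew t 0 (cis th) (\<i> * cis th)) (at th)"
      unfolding ew_def by (rule hvd3_c[OF smE])
    have "(h has_vector_derivative \<eta> t 0 (cis th) * (- (\<i> * cis (- th))) + ew t 0 (cis th) (\<i> * cis th) * cis (- th)) (at th)"
      unfolding h_def by (rule has_vector_derivative_mult[OF e1 cis_neg_hvd])
    moreover have "\<eta> t 0 (cis th) * (- (\<i> * cis (- th))) + ew t 0 (cis th) (\<i> * cis th) * cis (- th) = \<i> * complex_of_real c"
    proof -
      have m: "cis th * cis (- th) = 1" by (simp add: cis_mult)
      have "ew t 0 (cis th) (\<i> * cis th) = (complex_of_real c + \<eta> t 0 (cis th) / cis th) * (\<i> * cis th)"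
        unfolding c_def by (rule ew_rel[OF cz])
      also have "\<dots> = \<i> * complex_of_real c * cis th + \<i> * \<eta> t 0 (cis th)"
        using cz by (simp add: field_simps)
      finally show ?thesis using m by (simp add: algebra_simps)
    qed
    ultimately show ?thesis by simp
  qed
  define g where "g = (\<lambda>th. h th - \<i> * complex_of_real c * complex_of_real th)"
  have "(g has_vector_derivative 0) (at th within UNIV)" for th
  proof -
    have "(g has_vector_derivative \<i> * complex_of_real c - \<i> * complex_of_real c * complex_of_real 1) (at th)"
      unfolding g_def
      by (intro has_vector_derivative_diff hd has_vector_derivative_mult_right has_vector_derivative_of_real DERIV_ident)
    then show ?thesis by simp
  qed
  then obtain k where k: "\<And>th. th \<in> UNIV \<Longrightarrow> g th = k"
    using has_vector_derivative_zero_constant[of UNIV g] by blast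
  have c2: "cis (2 * pi) = 1" "cis (- (2 * pi)) = 1" by (simp_all add: complex_eq_iff)
  have "g (2 * pi) = g 0" using k by simp
  then have "\<i> * complex_of_real c * complex_of_real (2 * pi) = 0"
    unfolding g_def h_def c2 by simp
  then show ?thesis by (simp add: c_def)
qed

lemma tau_const: "\<tau> t x z = \<tau> 0 0 1"
proof -
  have "((\<lambda>s. \<tau> s 0 1) has_vector_derivative 0) (at s within UNIV)" for s
    using hvd_tt[of 0 1 s] tt_zero[of s] by simp
  then obtain k where k: "\<And>s. s \<in> UNIV \<Longrightarrow> \<tau> s 0 1 = k"
    using has_vector_derivative_zero_constant[of UNIV "\<lambda>s. \<tau> s 0 1"] by blast
  have nz: "\<tau> t x z = \<tau> 0 0 1" if "z \<noteq> 0" for z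
    using tau_T[OF that, of t x] k by simp
  show ?thesis
  proof (cases "z = 0")
    case True
    then show ?thesis using cont_zero[OF smT, of t x "\<tau> 0 0 1"] nz by blast
  next
    case False then show ?thesis by (rule nz)
  qed
qed

lemma ew_rel2:
  assumes z: "z \<noteq> 0"
  shows "ew t x z a = \<eta> t x z / z * a"
  using ew_rel[OF z] tt_zero by simp

lemma eta_lin_nz:
  assumes z: "z \<noteq> 0"
  shows "\<eta> t x z = \<eta> t x 1 * z"
proof -
  define S where "S = - {0 :: complex}"
  define f where "f = (\<lambda>w. \<eta> t x w * inverse w)"
  have oS: "open S" unfolding S_def by (intro open_Compl closed_singleton)
  have cS: "connected S" unfolding S_def by (intro connected_punctured_universe) simp
  have "(f has_derivative (\<lambda>h. 0)) (at w)" if "w \<in> S" for w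
  proof -
    have w: "w \<noteq> 0" using that by (simp add: S_def)
    have l: "((\<lambda>w::complex. (t, x, w)) has_derivative (\<lambda>h. (0, 0, h))) (at w)"
      by (auto intro!: derivative_eq_intros)
    have g: "((\<lambda>(t,x,z). \<eta> t x z) has_derivative frechet_derivative (\<lambda>(t,x,z). \<eta> t x z) (at (t, x, w))) (at (t, x, w))"
      by (rule smooth_hasd[OF smE])
    have e: "((\<lambda>w. \<eta> t x w) has_derivative (\<lambda>h. ew t x w h)) (at w)"
      using has_derivative_compose[OF l g] by (simp add: ew_def)
    have D: "(f has_derivative (\<lambda>h. \<eta> t x w * (- (inverse w * h * inverse w)) + ew t x w h * inverse w)) (at w)"
      unfolding f_def by (rule has_derivative_mult[OF e has_derivative_inverse'[OF w]])
    have Z: "(\<lambda>h. \<eta> t x w * (- (inverse w * h * inverse w)) + ew t x w h * inverse w) = (\<lambda>h. 0)"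
    proof
      fix h
      show "\<eta> t x w * (- (inverse w * h * inverse w)) + ew t x w h * inverse w = 0"
        using ew_rel2[OF w, of t x h] w by (simp add: field_simps)
    qed
    show ?thesis using D unfolding Z .
  qed
  then have "f z = f 1"
    by (intro has_derivative_zero_unique_connected[OF oS cS]) (auto simp: S_def z)
  then show ?thesis using z by (simp add: f_def field_simps)
qed

lemma eta_lin: "\<eta> t x z = \<eta> t x 1 * z"
proof (cases "z = 0")
  case False then show ?thesis by (rule eta_lin_nz)
next
  case True
  have L: "(\<lambda>n. (\<lambda>(t,x,z). \<eta> t x z) (t, x, complex_of_real (inverse (real (Suc n))))) \<longlonglongrightarrow> (\<lambda>(t,x,z). \<eta> t x z) (t, x, 0)"
    by (rule cont_seq[OF smooth_isCont[OF smE]])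
  have "(\<lambda>n. (\<lambda>(t,x,z). \<eta> t x z) (t, x, complex_of_real (inverse (real (Suc n)))))
      = (\<lambda>n. \<eta> t x 1 * complex_of_real (inverse (real (Suc n))))"
  proof
    fix n
    have nz: "complex_of_real (inverse (real (Suc n))) \<noteq> 0"
    proof -
      have "inverse (real (Suc n)) \<noteq> 0" by simp
      then show ?thesis by (simp only: of_real_eq_0_iff not_False_eq_True)
    qed
    show "(\<lambda>(t,x,z). \<eta> t x z) (t, x, complex_of_real (inverse (real (Suc n)))) = \<eta> t x 1 * complex_of_real (inverse (real (Suc n)))"
      using eta_lin_nz[OF nz, of t x] by (simp only: case_prod_conv)
  qed
  with L have L1: "(\<lambda>n. \<eta> t x 1 * complex_of_real (inverse (real (Suc n)))) \<longlonglongrightarrow> \<eta> t x 0" by simp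
  have L2: "(\<lambda>n. \<eta> t x 1 * complex_of_real (inverse (real (Suc n)))) \<longlonglongrightarrow> \<eta> t x 1 * complex_of_real 0"
    by (intro tendsto_intros LIMSEQ_inverse_real_of_nat)
  have "\<eta> t x 0 = \<eta> t x 1 * complex_of_real 0" by (rule LIMSEQ_unique[OF L1 L2])
  then show ?thesis using True by simp
qed

end

lemma smooth2_B: "smooth (\<lambda>(s::real, y::real). 1 + complex_of_real (y - x))"
proof -
  have e: "(\<lambda>(s::real, y::real). 1 + complex_of_real (y - x)) =
      (\<lambda>p. (\<lambda>p. 1 - complex_of_real x) p + (\<lambda>p. complex_of_real (snd p)) p * (\<lambda>p. 1) p)"
    by (auto simp: fun_eq_iff algebra_simps)
  have b2: "bounded_linear (\<lambda>p::real\<times>real. complex_of_real (snd p))"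
    using bounded_linear_compose[OF bounded_linear_of_real bounded_linear_snd] by (simp add: o_def)
  show ?thesis unfolding e by (intro smooth_add smooth_mult smooth_const smooth_linear b2)
qed

lemma NL1: "NL g 1 = 1" by (simp add: NL_def)
lemma NL2: "NL g 2 = complex_of_real (2 powr g) * 2" by (simp add: NL_def)

context LS begin

lemma dX_B: "dX (\<lambda>s y. 1 + complex_of_real (y - x)) = (\<lambda>s y. 1)"
proof (intro ext)
  fix s y
  have "((\<lambda>y. 1 + complex_of_real (y - x)) has_vector_derivative 0 + 1) (at y)"
    by (intro has_vector_derivative_add has_vector_derivative_const hvd_linx)
  then show "dX (\<lambda>s y. 1 + complex_of_real (y - x)) s y = 1"
    unfolding dX_def by (simp add: vector_derivative_at)
qed


lemma et_lin: "et t x z = et t x 1 * z"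
proof -
  have "(\<lambda>s. \<eta> s x z) = (\<lambda>s. \<eta> s x 1 * z)" by (rule ext, rule eta_lin)
  then have "((\<lambda>s. \<eta> s x z) has_vector_derivative et t x 1 * z) (at t)"
    using has_vector_derivative_mult_left[OF hvd_et[of x 1 t]] by simp
  then show ?thesis using hvd_et[of x z t] vector_derivative_unique_at by metis
qed

lemma ex_lin: "ex t y z = ex t y 1 * z"
proof -
  have "(\<lambda>y. \<eta> t y z) = (\<lambda>y. \<eta> t y 1 * z)" by (rule ext, rule eta_lin)
  then have "((\<lambda>y. \<eta> t y z) has_vector_derivative ex t y 1 * z) (at y)"
    using has_vector_derivative_mult_left[OF hvd_ex[of t 1 y]] by simp
  then show ?thesis using hvd_ex[of t z y] vector_derivative_unique_at by metis
qed

lemma exx_lin: "exx t x z = exx t x 1 * z"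
proof -
  have "(\<lambda>y. ex t y z) = (\<lambda>y. ex t y 1 * z)" by (rule ext, rule ex_lin)
  then have "((\<lambda>y. ex t y z) has_vector_derivative exx t x 1 * z) (at x)"
    using has_vector_derivative_mult_left[OF hvd_exx[of t 1 x]] by simp
  then show ?thesis using hvd_exx[of t z x] vector_derivative_unique_at by metis
qed

lemma testC2:
  assumes z: "z \<noteq> 0"
  shows "z * (\<i> * et t x 1 + exx t x 1) + complex_of_real (\<gamma> * Re (\<eta> t x 1)) * NL \<gamma> z = 0"
proof -
  have C: "\<i> * et t x z + exx t x z + dNL \<gamma> z (\<eta> t x z) - NL \<gamma> z / z * \<eta> t x z = 0"
    by (rule testC[OF z])
  have n: "dNL \<gamma> z (\<eta> t x 1 * z) = (\<eta> t x 1 + complex_of_real (\<gamma> * Re (\<eta> t x 1))) * NL \<gamma> z"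
    by (rule dNL_lin)
  have "z * (\<i> * et t x 1 + exx t x 1) + complex_of_real (\<gamma> * Re (\<eta> t x 1)) * NL \<gamma> z
      = \<i> * et t x z + exx t x z + dNL \<gamma> z (\<eta> t x z) - NL \<gamma> z / z * \<eta> t x z"
    unfolding et_lin[of t x z] exx_lin[of t x z] eta_lin[of t x z] n using z by (simp add: field_simps)
  then show ?thesis using C by simp
qed

lemma Re_phi: "Re (\<eta> t x 1) = 0" and K0: "\<i> * et t x 1 + exx t x 1 = 0"
proof -
  define K where "K = \<i> * et t x 1 + exx t x 1"
  define r where "r = \<gamma> * Re (\<eta> t x 1)"
  have e1: "K + complex_of_real r = 0" using testC2[of 1 t x] unfolding NL1 K_def r_def by simp
  have e2: "2 * K + complex_of_real r * (complex_of_real (2 powr \<gamma>) * 2) = 0"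
    using testC2[of 2 t x] unfolding NL2 K_def r_def by simp
  have "complex_of_real r * (complex_of_real (2 powr \<gamma>) * 2 - 2) = 0"
  proof -
    have "K = - complex_of_real r" using e1 by (simp add: eq_neg_iff_add_eq_0)
    then show ?thesis using e2 by (simp add: algebra_simps)
  qed
  moreover have "complex_of_real (2 powr \<gamma>) * 2 - 2 \<noteq> 0"
  proof
    assume "complex_of_real (2 powr \<gamma>) * 2 - 2 = 0"
    then have "2 powr \<gamma> = 1" by (simp add: complex_eq_iff)
    then show False using gam by simp
  qed
  ultimately have "r = 0" by simp
  then show "Re (\<eta> t x 1) = 0" using gam by (simp add: r_def)
  show "\<i> * et t x 1 + exx t x 1 = 0" using e1 \<open>r = 0\<close> by (simp add: K_def)
qed

lemma testB: "ex t x 1 = 0"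
proof -
  define \<psi> where "\<psi> = (\<lambda>(s::real) y. 1 + complex_of_real (y - x))"
  define V where "V = (\<lambda>y::real. - (NL \<gamma> 1 / 1) + complex_of_real y * 0)"
  have sV: "smooth V" and dV: "vector_derivative V (at x) = 0" unfolding V_def by (rule VC_facts)+
  have vx: "V x = - (NL \<gamma> 1 / 1)" by (simp add: V_def)
  have pz: "\<psi> t x = 1" by (simp add: \<psi>_def)
  have dTp: "dT \<psi> = (\<lambda>s y. 0)" unfolding \<psi>_def by (rule dT_fy)
  have dXp: "dX \<psi> = (\<lambda>s y. 1)" unfolding \<psi>_def by (rule dX_B)
  have sp: "smooth (\<lambda>(s,y). \<psi> s y)" unfolding \<psi>_def by (rule smooth2_B)
  have D: "Delta \<gamma> V \<psi> t x = 0" unfolding Delta_def pz dTp dXp vx by simp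
  have P: "prQDelta \<gamma> V \<tau> \<xi> \<eta> \<psi> t x = 0" by (rule crit[OF sV sp _ D]) (simp add: pz)
  define cq where "cq = charQ \<tau> \<xi> \<eta> \<psi>"
  have cq0: "cq = (\<lambda>s y. \<eta> s y (\<psi> s y))" by (simp add: fun_eq_iff cq_def charQ_def dTp xi0)
  have cq': "cq = (\<lambda>s y. \<eta> s y 1 * (1 + complex_of_real (y - x)))"
    unfolding cq0 by (rule ext, rule ext, simp only: \<psi>_def, rule eta_lin)
  have cqx: "(\<lambda>s. cq s x) = (\<lambda>s. \<eta> s x 1)" by (simp add: cq')
  have e1: "eta_t \<tau> \<xi> \<eta> \<psi> t x = et t x 1"
    unfolding eta_t_def cq_def[symmetric] dT_def[of cq] cqx dTp
    using vector_derivative_at[OF hvd_et] by (simp add: xi0)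
  have dcq: "dX cq t y = \<eta> t y 1 * 1 + ex t y 1 * (1 + complex_of_real (y - x))" for y
  proof -
    have "((\<lambda>r. cq t r) has_vector_derivative \<eta> t y 1 * 1 + ex t y 1 * (1 + complex_of_real (y - x))) (at y)"
    proof -
      have "((\<lambda>r. 1 + complex_of_real (r - x)) has_vector_derivative 0 + 1) (at y)"
        by (intro has_vector_derivative_add has_vector_derivative_const hvd_linx)
      from has_vector_derivative_mult[OF hvd_ex[of t 1 y] this] show ?thesis by (simp add: cq')
    qed
    then show ?thesis unfolding dX_def by (rule vector_derivative_at)
  qed
  have h2: "((\<lambda>y. dX cq t y) has_vector_derivative ex t x 1 * 1 + (ex t x 1 * (0 + 1) + exx t x 1 * (1 + complex_of_real (x - x)))) (at x)"
    unfolding dcq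
    by (intro has_vector_derivative_add has_vector_derivative_mult has_vector_derivative_mult_left
        hvd_ex hvd_exx has_vector_derivative_const hvd_linx)
  have e2: "eta_xx \<tau> \<xi> \<eta> \<psi> t x = 2 * ex t x 1 + exx t x 1"
    using vector_derivative_at[OF h2] unfolding eta_xx_def cq_def[symmetric] dX_def[of "dX cq"] dXp
    by (simp add: xi0)
  have B: "\<i> * et t x 1 + (2 * ex t x 1 + exx t x 1) + dNL \<gamma> 1 (\<eta> t x 1) - NL \<gamma> 1 / 1 * \<eta> t x 1 = 0"
    using P unfolding prQDelta_def e1 e2 dV vx pz by (simp add: xi0)
  have C: "\<i> * et t x 1 + exx t x 1 + dNL \<gamma> 1 (\<eta> t x 1) - NL \<gamma> 1 / 1 * \<eta> t x 1 = 0"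
    by (rule testC) simp
  have "2 * ex t x 1 = (\<i> * et t x 1 + (2 * ex t x 1 + exx t x 1) + dNL \<gamma> 1 (\<eta> t x 1) - NL \<gamma> 1 / 1 * \<eta> t x 1)
      - (\<i> * et t x 1 + exx t x 1 + dNL \<gamma> 1 (\<eta> t x 1) - NL \<gamma> 1 / 1 * \<eta> t x 1)"
    by (simp add: algebra_simps)
  then show ?thesis unfolding B C by simp
qed

lemma exx1: "exx t x 1 = 0"
proof -
  have "(\<lambda>y. ex t y 1) = (\<lambda>y. 0)" using testB by auto
  then have "((\<lambda>y. ex t y 1) has_vector_derivative 0) (at x)" by simp
  then show ?thesis using hvd_exx[of t 1 x] vector_derivative_unique_at by metis
qed

lemma et1: "et t x 1 = 0" using K0[of t x] exx1[of t x] by simp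

lemma phi_const: "\<eta> t x 1 = \<eta> 0 0 1"
proof -
  have "((\<lambda>y. \<eta> t y 1) has_vector_derivative 0) (at y within UNIV)" for y
    using hvd_ex[of t 1 y] testB[of t y] by simp
  then obtain k where k: "\<And>y. y \<in> UNIV \<Longrightarrow> \<eta> t y 1 = k"
    using has_vector_derivative_zero_constant[of UNIV "\<lambda>y. \<eta> t y 1"] by blast
  have "((\<lambda>s. \<eta> s 0 1) has_vector_derivative 0) (at s within UNIV)" for s
    using hvd_et[of 0 1 s] et1[of s 0] by simp
  then obtain k2 where k2: "\<And>s. s \<in> UNIV \<Longrightarrow> \<eta> s 0 1 = k2"
    using has_vector_derivative_zero_constant[of UNIV "\<lambda>s. \<eta> s 0 1"] by blast
  show ?thesis using k[of x] k[of 0] k2[of t] k2[of 0] by simp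
qed

lemma final: "\<exists>a b. \<tau> = (\<lambda>t x z. b) \<and> \<xi> = (\<lambda>t x z. 0) \<and> \<eta> = (\<lambda>t x z. \<i> * complex_of_real a * z)"
proof (intro exI conjI)
  show "\<tau> = (\<lambda>t x z. \<tau> 0 0 1)" using tau_const by (intro ext) 
  show "\<xi> = (\<lambda>t x z. 0)" by (rule xi0)
  have r: "\<eta> 0 0 1 = \<i> * complex_of_real (Im (\<eta> 0 0 1))"
    using Re_phi[of 0 0] by (simp add: complex_eq_iff)
  show "\<eta> = (\<lambda>t x z. \<i> * complex_of_real (Im (\<eta> 0 0 1)) * z)"
  proof (intro ext)
    fix t x z
    have "\<eta> t x z = \<eta> t x 1 * z" by (rule eta_lin)
    also have "\<dots> = \<eta> 0 0 1 * z" by (subst phi_const[of t x]) (rule refl)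
    also have "\<dots> = \<i> * complex_of_real (Im (\<eta> 0 0 1)) * z" by (subst r) simp
    finally show "\<eta> t x z = \<i> * complex_of_real (Im (\<eta> 0 0 1)) * z" .
  qed
qed

end

theorem lemma9:
  fixes \<gamma> :: real
  assumes "\<gamma> \<noteq> 0"
  shows "(\<Inter>{max_lie_alg \<gamma> V | V :: real \<Rightarrow> complex. smooth V}) =
         {((\<lambda>t x z. b), (\<lambda>t x z. 0), (\<lambda>t x z. \<i> * complex_of_real a * z)) | a b :: real. True}"
proof (rule set_eqI, rule iffI)
  fix q :: "(real \<Rightarrow> real \<Rightarrow> complex \<Rightarrow> real) \<times> (real \<Rightarrow> real \<Rightarrow> complex \<Rightarrow> real) \<times> (real \<Rightarrow> real \<Rightarrow> complex \<Rightarrow> complex)"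
  assume q: "q \<in> \<Inter>{max_lie_alg \<gamma> V | V :: real \<Rightarrow> complex. smooth V}"
  obtain \<tau> \<xi> \<eta> where qe: "q = (\<tau>, \<xi>, \<eta>)" by (cases q) auto
  have "lie_sym \<gamma> V \<tau> \<xi> \<eta>" if "smooth V" for V
  proof -
    have "q \<in> max_lie_alg \<gamma> V" using q that by blast
    then show ?thesis by (simp add: max_lie_alg_def qe)
  qed
  then interpret LS \<gamma> \<tau> \<xi> \<eta> using assms by unfold_locales auto
  obtain a b where "\<tau> = (\<lambda>t x z. b)" "\<xi> = (\<lambda>t x z. 0)" "\<eta> = (\<lambda>t x z. \<i> * complex_of_real a * z)"
    using final by blast
  then show "q \<in> {((\<lambda>t x z. b), (\<lambda>t x z. 0), (\<lambda>t x z. \<i> * complex_of_real a * z)) | a b :: real. True}"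
    using qe by blast
next
  fix q :: "(real \<Rightarrow> real \<Rightarrow> complex \<Rightarrow> real) \<times> (real \<Rightarrow> real \<Rightarrow> complex \<Rightarrow> real) \<times> (real \<Rightarrow> real \<Rightarrow> complex \<Rightarrow> complex)"
  assume "q \<in> {((\<lambda>t x z. b), (\<lambda>t x z. 0), (\<lambda>t x z. \<i> * complex_of_real a * z)) | a b :: real. True}"
  then obtain a b where qe: "q = ((\<lambda>t x z. b), (\<lambda>t x z. 0), (\<lambda>t x z. \<i> * complex_of_real a * z))" by blast
  show "q \<in> \<Inter>{max_lie_alg \<gamma> V | V :: real \<Rightarrow> complex. smooth V}"
  proof
    fix X assume "X \<in> {max_lie_alg \<gamma> V | V :: real \<Rightarrow> complex. smooth V}"
    then obtain V where X: "X = max_lie_alg \<gamma> V" and sV: "smooth V" by blast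
    show "q \<in> X" unfolding X qe max_lie_alg_def using sym_ok[OF sV, of \<gamma> b a] by simp
  qed
qed


end
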